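(* Assume the setup and monomial order in the context. The unique minimal (with respect to inclusion) subset of $X^*$ generating the monoid ideal $\mathrm{Tip}(I)$ of the free monoid $X^*$ is $$\{v_{j,n}v^\dagger_{1,r(i)}: v\in M,\ (j,i)\in[n]^2\}.$$ In particular $X\cap\mathrm{Tip}(I)=\emptyset$.
   Context: Let $k$ be a field and $n\ge 2$ an integer; write $[n]=\{1,\dots,n\}$ and $r(i)=n+1-i$. Let $X=\{u_{j,i},u^*_{j,i}:(j,i)\in[n]^2\}$ be a set of $2n^2$ distinct symbols and let $*$ be the involution of $X$ exchanging $u_{j,i}$ and $u^*_{j,i}$. Let $k\langle X\rangle$ be the free unital $k$-algebra on $X$, with $k$-basis the free monoid $X^*$ of monomials. For an $n\times n$ matrix $v=(v_{j,i})$ with entries in $X$ define $n\times n$ matrices $v^t,v^\star,v^\dagger$ with entries in $X$ by $v^t_{j,i}=v_{i,j}$, $v^\star_{j,i}=(v_{r(j),r(i)})^*$, $v^\dagger_{j,i}=(v_{r(i),r(j)})^*$. Let $u=(u_{j,i})$ and $M=\{u,u^t,u^\star,u^\dagger\}$. Let $I$ be the two-sided ideal generated by $R=\{\sum_{s=1}^n v_{j,r(s)}v^\dagger_{s,r(i)}-\delta_{j,i}1: v\in M,(j,i)\in[n]^2\}$. Monomial order: let $\le$ be the total order on $X$ with $u^*_{t,s}<u_{j,i}$ for all indices, $u_{t,s}<u_{j,i}$ iff $(t,s)<(j,i)$ lexicographically, and $u^*_{t,s}<u^*_{j,i}$ iff $(j,i)<(t,s)$ lexicographically; extend it degree-lexicographically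 to $X^*$. For $0\ne p\in k\langle X\rangle$, $\mathrm{tip}(p)$ is the $\le$-largest monomial with nonzero coefficient in $p$; $\mathrm{Tip}(I)=\{\mathrm{tip}(p):0\ne p\in I\}$, a monoid ideal (closed under multiplication by monomials on both sides). *)

theory Defs
  imports Main
begin

section \<open>Alphabet X = {u_{j,i}, u*_{j,i}}\<close>

datatype xsym = U nat nat | Us nat nat

fun inv_sym :: "xsym \<Rightarrow> xsym" where
  "inv_sym (U j i) = Us j i"
| "inv_sym (Us j i) = U j i"

definition idx :: "nat \<Rightarrow> nat set" where "idx n = {1..n}"

definition Xn :: "nat \<Rightarrow> xsym set" where
  "Xn n = {U j i | j i. j \<in> idx n \<and> i \<in> idx n} \<union> {Us j i | j i. j \<in> idx n \<and> i \<in> idx n}"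

definition words :: "nat \<Rightarrow> xsym list set" where
  "words n = {w. set w \<subseteq> Xn n}"

section \<open>Free algebra k<X>: finitely supported coefficient functions on X^*\<close>

definition alg :: "nat \<Rightarrow> (xsym list \<Rightarrow> 'k::field) set" where
  "alg n = {p. finite {w. p w \<noteq> 0} \<and> (\<forall>w. p w \<noteq> 0 \<longrightarrow> w \<in> words n)}"

definition padd :: "(xsym list \<Rightarrow> 'k::field) \<Rightarrow> (xsym list \<Rightarrow> 'k) \<Rightarrow> xsym list \<Rightarrow> 'k" where
  "padd p q = (\<lambda>w. p w + q w)"

definition psub :: "(xsym list \<Rightarrow> 'k::field) \<Rightarrow> (xsym list \<Rightarrow> 'k) \<Rightarrow> xsym list \<Rightarrow> 'k" where
  "psub p q = (\<lambda>w. p w - q w)"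

definition pmul :: "(xsym list \<Rightarrow> 'k::field) \<Rightarrow> (xsym list \<Rightarrow> 'k) \<Rightarrow> xsym list \<Rightarrow> 'k" where
  "pmul p q = (\<lambda>w. \<Sum>i\<in>{0..length w}. p (take i w) * q (drop i w))"

definition pzero :: "xsym list \<Rightarrow> 'k::field" where
  "pzero = (\<lambda>w. 0)"

definition mono :: "xsym list \<Rightarrow> xsym list \<Rightarrow> 'k::field" where
  "mono m = (\<lambda>w. if w = m then 1 else 0)"

definition psum :: "'a set \<Rightarrow> ('a \<Rightarrow> xsym list \<Rightarrow> 'k::field) \<Rightarrow> xsym list \<Rightarrow> 'k" where
  "psum A f = (\<lambda>w. \<Sum>a\<in>A. f a w)"

inductive_set gen_ideal :: "nat \<Rightarrow> (xsym list \<Rightarrow> 'k::field) set \<Rightarrow> (xsym list \<Rightarrow> 'k) set"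
  for n :: nat and G :: "(xsym list \<Rightarrow> 'k) set" where
  zero: "pzero \<in> gen_ideal n G"
| gen: "\<lbrakk>a \<in> alg n; g \<in> G; b \<in> alg n\<rbrakk> \<Longrightarrow> pmul (pmul a g) b \<in> gen_ideal n G"
| add: "\<lbrakk>p \<in> gen_ideal n G; q \<in> gen_ideal n G\<rbrakk> \<Longrightarrow> padd p q \<in> gen_ideal n G"

definition rr :: "nat \<Rightarrow> nat \<Rightarrow> nat" where "rr n i = n + 1 - i"

definition umat :: "nat \<Rightarrow> nat \<Rightarrow> xsym" where "umat = (\<lambda>j i. U j i)"

definition mtr :: "(nat \<Rightarrow> nat \<Rightarrow> xsym) \<Rightarrow> nat \<Rightarrow> nat \<Rightarrow> xsym" where
  "mtr v = (\<lambda>j i. v i j)"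

definition mstar :: "nat \<Rightarrow> (nat \<Rightarrow> nat \<Rightarrow> xsym) \<Rightarrow> nat \<Rightarrow> nat \<Rightarrow> xsym" where
  "mstar n v = (\<lambda>j i. inv_sym (v (rr n j) (rr n i)))"

definition mdag :: "nat \<Rightarrow> (nat \<Rightarrow> nat \<Rightarrow> xsym) \<Rightarrow> nat \<Rightarrow> nat \<Rightarrow> xsym" where
  "mdag n v = (\<lambda>j i. inv_sym (v (rr n i) (rr n j)))"

definition Mset :: "nat \<Rightarrow> (nat \<Rightarrow> nat \<Rightarrow> xsym) set" where
  "Mset n = {umat, mtr umat, mstar n umat, mdag n umat}"

definition Rrel :: "nat \<Rightarrow> (xsym list \<Rightarrow> 'k::field) set" where
  "Rrel n = {psub (psum (idx n) (\<lambda>s. mono [v j (rr n s), mdag n v s (rr n i)]))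
                  (if j = i then mono [] else pzero)
             | v j i. v \<in> Mset n \<and> j \<in> idx n \<and> i \<in> idx n}"

definition Iideal :: "nat \<Rightarrow> (xsym list \<Rightarrow> 'k::field) set" where
  "Iideal n = gen_ideal n (Rrel n)"

fun sym_less :: "xsym \<Rightarrow> xsym \<Rightarrow> bool" where
  "sym_less (Us t s) (U j i) = True"
| "sym_less (U t s) (Us j i) = False"
| "sym_less (U t s) (U j i) = (t < j \<or> (t = j \<and> s < i))"
| "sym_less (Us t s) (Us j i) = (j < t \<or> (j = t \<and> i < s))"

definition word_less :: "xsym list \<Rightarrow> xsym list \<Rightarrow> bool" where
  "word_less w w' = (length w < length w' \<or>
     (length w = length w' \<and> (w, w') \<in> lexord {(a, b). sym_less a b}))"

definition word_le :: "xsym list \<Rightarrow> xsym list \<Rightarrow> bool" where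
  "word_le w w' = (w = w' \<or> word_less w w')"

definition tip :: "(xsym list \<Rightarrow> 'k::field) \<Rightarrow> xsym list" where
  "tip p = (THE m. p m \<noteq> 0 \<and> (\<forall>m'. p m' \<noteq> 0 \<longrightarrow> word_le m' m))"

definition Tip :: "(xsym list \<Rightarrow> 'k::field) set \<Rightarrow> xsym list set" where
  "Tip J = {tip p | p. p \<in> J \<and> p \<noteq> pzero}"

definition monoid_ideal_gen :: "nat \<Rightarrow> xsym list set \<Rightarrow> xsym list set" where
  "monoid_ideal_gen n G = {a @ g @ b | a g b. a \<in> words n \<and> g \<in> G \<and> b \<in> words n}"

definition tip_generators :: "nat \<Rightarrow> xsym list set" where
  "tip_generators n = {[v j n, mdag n v 1 (rr n i)] | v j i. v \<in> Mset n \<and> j \<in> idx n \<and> i \<in> idx n}"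

end

theory Submission
  imports Defs
begin

section \<open>Order\<close>

abbreviation SL :: "(xsym \<times> xsym) set" where "SL \<equiv> {(a, b). sym_less a b}"

lemma sym_less_irrefl[simp]: "\<not> sym_less x x"
  by (cases x) auto

lemma sym_less_trans: "sym_less x y \<Longrightarrow> sym_less y z \<Longrightarrow> sym_less x z"
  by (cases x; cases y; cases z) auto

lemma sym_less_total: "x \<noteq> y \<Longrightarrow> sym_less x y \<or> sym_less y x"
  by (cases x; cases y) auto

lemma trans_SL: "trans SL"
  by (auto intro: transI sym_less_trans)

lemma wl_irrefl[simp]: "\<not> word_less u u"
  unfolding word_less_def using lexord_irreflexive[of SL u] by auto

lemma wl_trans: "word_less u v \<Longrightarrow> word_less v w \<Longrightarrow> word_less u w"
  unfolding word_less_def using lexord_trans[OF _ _ trans_SL] by auto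

lemma wl_total: "u \<noteq> v \<Longrightarrow> word_less u v \<or> word_less v u"
  unfolding word_less_def using lexord_linear[of SL u v] sym_less_total
  by (metis (mono_tags, lifting) case_prod_conv linorder_neqE_nat mem_Collect_eq)

lemma wl_asym: "word_less u v \<Longrightarrow> \<not> word_less v u"
  using wl_trans wl_irrefl by blast

lemma wl_app: "word_less u v \<Longrightarrow> word_less (a @ u @ b) (a @ v @ b)"
  unfolding word_less_def
  by (auto intro!: lexord_append_leftI lexord_sufI)

lemma wle_refl[simp]: "word_le u u" by (simp add: word_le_def)

lemma wle_trans: "word_le u v \<Longrightarrow> word_le v w \<Longrightarrow> word_le u w"
  unfolding word_le_def using wl_trans by blast

lemma wle_less_trans: "word_le u v \<Longrightarrow> word_less v w \<Longrightarrow> word_less u w"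
  unfolding word_le_def using wl_trans by blast

lemma wle_antisym: "word_le u v \<Longrightarrow> word_le v u \<Longrightarrow> u = v"
  unfolding word_le_def using wl_asym by blast

lemma wle_app: "word_le u v \<Longrightarrow> word_le (a @ u @ b) (a @ v @ b)"
  unfolding word_le_def using wl_app by blast

lemma wle_total: "word_le u v \<or> word_le v u"
  unfolding word_le_def using wl_total by blast

lemma wl_length: "length u < length v \<Longrightarrow> word_less u v"
  by (simp add: word_less_def)

lemma wl_imp_le: "word_less u v \<Longrightarrow> word_le u v" by (simp add: word_le_def)

lemma wle_length: "word_le u v \<Longrightarrow> length u \<le> length v"
  unfolding word_le_def word_less_def by auto

lemma wl_cons_first: "sym_less x y \<Longrightarrow> length u = length v \<Longrightarrow> word_less (x # u) (y # v)"
  unfolding word_less_def by simp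

lemma wl_cons_same: "word_less u v \<Longrightarrow> word_less (x # u) (x # v)"
  using wl_app[of u v "[x]" "[]"] by simp

lemma tip_eqI: "p m \<noteq> 0 \<Longrightarrow> (\<And>u. p u \<noteq> 0 \<Longrightarrow> word_le u m) \<Longrightarrow> tip p = m"
  unfolding tip_def by (rule the_equality) (auto intro: wle_antisym)

section \<open>Polynomial basics\<close>

definition smul :: "'k::field \<Rightarrow> (xsym list \<Rightarrow> 'k) \<Rightarrow> xsym list \<Rightarrow> 'k" where
  "smul c p = (\<lambda>w. c * p w)"

definition sh :: "xsym list \<Rightarrow> (xsym list \<Rightarrow> 'k::field) \<Rightarrow> xsym list \<Rightarrow> xsym list \<Rightarrow> 'k" where
  "sh a p b = pmul (pmul (mono a) p) (mono b)"

lemma pmul_mono_left: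
  "pmul (mono a) p w = (if take (length a) w = a then p (drop (length a) w) else 0)"
proof -
  have "pmul (mono a) p w = (\<Sum>i\<in>{0..length w}. (if i = length a then
          (if take (length a) w = a then p (drop (length a) w) else 0) else 0))"
    unfolding pmul_def mono_def
  proof (rule sum.cong)
    fix i assume i: "i \<in> {0..length w}"
    show "(if take i w = a then 1 else 0) * p (drop i w) = (if i = length a then
          (if take (length a) w = a then p (drop (length a) w) else 0) else 0)"
    proof (cases "take i w = a")
      case True
      then have "length a = i" using i by auto
      then show ?thesis using True by simp
    qed auto
  qed simp
  also have "\<dots> = (if take (length a) w = a then p (drop (length a) w) else 0)"
  proof (cases "take (length a) w = a")
    case True
    then have "length (take (length a) w) = length a" by simp
    then have "length a \<le> length w" by (simp add: min_def split: if_splits)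
    then show ?thesis using True by simp
  qed simp
  finally show ?thesis .
qed

lemma pmul_mono_right:
  "pmul p (mono b) w = (if length b \<le> length w \<and> drop (length w - length b) w = b
                        then p (take (length w - length b) w) else 0)"
proof -
  have "pmul p (mono b) w = (\<Sum>i\<in>{0..length w}. (if i = length w - length b then
          (if length b \<le> length w \<and> drop (length w - length b) w = b
           then p (take (length w - length b) w) else 0) else 0))"
    unfolding pmul_def mono_def
  proof (rule sum.cong)
    fix i assume i: "i \<in> {0..length w}"
    show "p (take i w) * (if drop i w = b then 1 else 0) = (if i = length w - length b then
          (if length b \<le> length w \<and> drop (length w - length b) w = b
           then p (take (length w - length b) w) else 0) else 0)"
    proof (cases "drop i w = b")
      case True
      then have "length b = length w - i" by auto
      then have "i = length w - length b" "length b \<le> length w" using i by auto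
      then show ?thesis using True by simp
    qed auto
  qed simp
  also have "\<dots> = (if length b \<le> length w \<and> drop (length w - length b) w = b
                        then p (take (length w - length b) w) else 0)"
    by simp
  finally show ?thesis .
qed

lemma sh_app[simp]: "sh a p b (a @ u @ b) = p u"
  unfolding sh_def by (simp add: pmul_mono_left pmul_mono_right)

lemma sh_nonapp: "(\<And>u. w \<noteq> a @ u @ b) \<Longrightarrow> sh a p b w = 0"
proof -
  assume H: "\<And>u. w \<noteq> a @ u @ b"
  let ?m = "length w - length b"
  show ?thesis
  proof (cases "length b \<le> length w \<and> drop ?m w = b \<and> take (length a) (take ?m w) = a")
    case True
    then have "w = a @ drop (length a) (take ?m w) @ b"
      by (metis append_take_drop_id append.assoc)
    then show ?thesis using H by blast
  next
    case False
    then show ?thesis unfolding sh_def by (auto simp: pmul_mono_left pmul_mono_right)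
  qed
qed

lemma sh_eqI:
  assumes "\<And>u. F (a @ u @ b) = sh a p b (a @ u @ b)" "\<And>w. (\<And>u. w \<noteq> a @ u @ b) \<Longrightarrow> F w = 0"
  shows "F = sh a p b"
proof
  fix w show "F w = sh a p b w"
  proof (cases "\<exists>u. w = a @ u @ b")
    case False
    then have "\<And>u. w \<noteq> a @ u @ b" by blast
    then show ?thesis using assms(2) sh_nonapp[of w a b p] by simp
  qed (use assms in auto)
qed

lemma sh_padd: "sh a (padd p q) b = padd (sh a p b) (sh a q b)"
  by (rule sh_eqI[symmetric]) (auto simp: padd_def sh_nonapp)

lemma sh_psub: "sh a (psub p q) b = psub (sh a p b) (sh a q b)"
  by (rule sh_eqI[symmetric]) (auto simp: psub_def sh_nonapp)

lemma sh_smul: "sh a (smul c p) b = smul c (sh a p b)"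
  by (rule sh_eqI[symmetric]) (auto simp: smul_def sh_nonapp)

lemma sh_pzero[simp]: "sh a pzero b = pzero"
  by (rule sh_eqI[symmetric]) (auto simp: pzero_def sh_nonapp)

lemma sh_psum: "sh a (psum A f) b = psum A (\<lambda>t. sh a (f t) b)"
  by (rule sh_eqI[symmetric]) (auto simp: psum_def sh_nonapp)

lemma sh_mono: "sh a (mono u) b = mono (a @ u @ b)"
  by (rule sh_eqI[symmetric]) (auto simp: mono_def sh_nonapp)

lemma sh_nil[simp]: "sh [] p [] = p"
  by (rule ext) (metis append.left_neutral append_Nil2 sh_app)

lemma sh_sh: "sh a (sh a' p b') b = sh (a @ a') p (b' @ b)"
proof (rule sh_eqI)
  fix u show "sh a (sh a' p b') b ((a @ a') @ u @ b' @ b) = sh (a @ a') p (b' @ b) ((a @ a') @ u @ b' @ b)"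
    by (metis append.assoc sh_app)
next
  fix w assume H: "\<And>u. w \<noteq> (a @ a') @ u @ b' @ b"
  show "sh a (sh a' p b') b w = 0"
  proof (cases "\<exists>v. w = a @ v @ b")
    case True
    then obtain v where 1: "w = a @ v @ b" by blast
    have "\<And>u. v \<noteq> a' @ u @ b'" using H 1 by auto
    then show ?thesis using 1 by (simp add: sh_nonapp)
  qed (simp add: sh_nonapp)
qed

lemma padd_pzero[simp]: "padd pzero p = p" "padd p pzero = p"
  by (auto simp: padd_def pzero_def)

lemma smul_pzero[simp]: "smul c pzero = pzero"
  by (auto simp: smul_def pzero_def)

lemma psub_as_padd: "psub p q = padd p (smul (-1) q)"
  by (auto simp: psub_def padd_def smul_def)

lemma psum_empty[simp]: "psum {} f = pzero"
  by (auto simp: psum_def pzero_def)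

lemma psum_insert: "finite A \<Longrightarrow> x \<notin> A \<Longrightarrow> psum (insert x A) f = padd (f x) (psum A f)"
  by (auto simp: psum_def padd_def)

lemma decomp:
  assumes "finite S" "\<And>w. p w \<noteq> 0 \<Longrightarrow> w \<in> S"
  shows "p = psum S (\<lambda>u. smul (p u) (mono u))"
proof
  fix w
  have "psum S (\<lambda>u. smul (p u) (mono u)) w = (\<Sum>u\<in>S. if u = w then p w else 0)"
    unfolding psum_def smul_def mono_def by (rule sum.cong) auto
  also have "\<dots> = p w" using assms by (auto simp: sum.delta)
  finally show "p w = psum S (\<lambda>u. smul (p u) (mono u)) w" by simp
qed

lemma pmul_psum_left: "pmul (psum A f) q = psum A (\<lambda>a. pmul (f a) q)"
  unfolding pmul_def psum_def
  by (auto simp: sum_distrib_right intro!: ext sum.swap)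

lemma pmul_psum_right: "pmul q (psum A f) = psum A (\<lambda>a. pmul q (f a))"
  unfolding pmul_def psum_def
  by (auto simp: sum_distrib_left intro!: ext sum.swap)

lemma pmul_smul_left: "pmul (smul c p) q = smul c (pmul p q)"
  unfolding pmul_def smul_def by (auto simp: sum_distrib_left mult.assoc)

lemma pmul_smul_right: "pmul p (smul c q) = smul c (pmul p q)"
  unfolding pmul_def smul_def by (auto simp: sum_distrib_left mult.assoc mult.left_commute)

lemma psum_smul: "psum A (\<lambda>a. smul c (f a)) = smul c (psum A f)"
  unfolding psum_def smul_def by (auto simp: sum_distrib_left)

section \<open>Concrete relations\<close>

datatype kind = KA | KB | KC | KD

definition Rel :: "nat \<Rightarrow> (nat \<Rightarrow> xsym list) \<Rightarrow> bool \<Rightarrow> xsym list \<Rightarrow> 'k::field" where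
  "Rel n f c = psub (psum (idx n) (\<lambda>t. mono (f t))) (if c then mono [] else pzero)"

fun wf :: "nat \<Rightarrow> kind \<Rightarrow> nat \<Rightarrow> nat \<Rightarrow> nat \<Rightarrow> xsym list" where
  "wf n KA j i t = [U j t, Us i t]"
| "wf n KB j i t = [U t j, Us t i]"
| "wf n KC j i t = [Us j t, U i t]"
| "wf n KD j i t = [Us t j, U t i]"

fun rel :: "nat \<Rightarrow> kind \<times> nat \<times> nat \<Rightarrow> xsym list \<Rightarrow> 'k::field" where
  "rel n (k, j, i) = Rel n (wf n k j i) (j = i)"

fun tipw :: "nat \<Rightarrow> kind \<times> nat \<times> nat \<Rightarrow> xsym list" where
  "tipw n (KA, j, i) = [U j n, Us i n]"
| "tipw n (KB, j, i) = [U n j, Us n i]"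
| "tipw n (KC, j, i) = [Us j 1, U i 1]"
| "tipw n (KD, j, i) = [Us 1 j, U 1 i]"

definition Qs :: "nat \<Rightarrow> (kind \<times> nat \<times> nat) set" where
  "Qs n = UNIV \<times> idx n \<times> idx n"

lemma rr_idx: "i \<in> idx n \<Longrightarrow> rr n i \<in> idx n"
  by (auto simp: rr_def idx_def)

lemma rr_rr: "i \<in> idx n \<Longrightarrow> rr n (rr n i) = i"
  by (auto simp: rr_def idx_def)

lemma rr_1[simp]: "rr n 1 = n" "rr n (Suc 0) = n" and rr_n[simp]: "rr n n = 1"
  by (auto simp: rr_def)

lemma rr_inj: "i \<in> idx n \<Longrightarrow> j \<in> idx n \<Longrightarrow> rr n i = rr n j \<longleftrightarrow> i = j"
  by (auto simp: rr_def idx_def)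

lemma psum_cong: "(\<And>x. x \<in> A \<Longrightarrow> f x = g x) \<Longrightarrow> psum A f = psum A g"
  unfolding psum_def by (auto intro!: ext sum.cong)

lemma psum_rr: "psum (idx n) (\<lambda>s. F (rr n s)) = psum (idx n) F"
  unfolding psum_def
proof (rule ext, rule sum.reindex_bij_witness[of _ "rr n" "rr n"])
qed (auto simp: rr_idx rr_rr)

lemma Rrel_memI: "v \<in> Mset n \<Longrightarrow> j \<in> idx n \<Longrightarrow> i \<in> idx n \<Longrightarrow>
  p = psub (psum (idx n) (\<lambda>s. mono [v j (rr n s), mdag n v s (rr n i)])) (if j = i then mono [] else pzero)
  \<Longrightarrow> p \<in> Rrel n"
  unfolding Rrel_def mem_Collect_eq by (rule exI[of _ v], rule exI[of _ j], rule exI[of _ i]) auto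

lemma tipgen_memI: "v \<in> Mset n \<Longrightarrow> j \<in> idx n \<Longrightarrow> i \<in> idx n \<Longrightarrow>
  p = [v j n, mdag n v 1 (rr n i)] \<Longrightarrow> p \<in> tip_generators n"
  unfolding tip_generators_def mem_Collect_eq by (rule exI[of _ v], rule exI[of _ j], rule exI[of _ i]) auto

lemma Qs_memI: "j \<in> idx n \<Longrightarrow> i \<in> idx n \<Longrightarrow> (k, j, i) \<in> Qs n"
  by (simp add: Qs_def)

lemma relA: "psub (psum (idx n) (\<lambda>s. mono [v j (rr n s), mdag n v s (rr n i)])) (if j = i then mono [] else pzero)
      = (rel n (KA, j, i) :: xsym list \<Rightarrow> 'k::field)"
if "v = umat" "j \<in> idx n" "i \<in> idx n"
proof -
  let ?F = "\<lambda>t. mono (wf n KA j i t) :: xsym list \<Rightarrow> 'k::field"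
  have "psum (idx n) (\<lambda>s. mono [v j (rr n s), mdag n v s (rr n i)]) = psum (idx n) (\<lambda>s. ?F (rr n s))"
    using that by (intro psum_cong) (auto simp: umat_def mdag_def rr_rr)
  also have "\<dots> = psum (idx n) ?F" by (rule psum_rr)
  finally have E: "psum (idx n) (\<lambda>s. mono [v j (rr n s), mdag n v s (rr n i)]) = psum (idx n) ?F" .
  show ?thesis unfolding rel.simps Rel_def E by simp
qed

lemma relB: "psub (psum (idx n) (\<lambda>s. mono [v j (rr n s), mdag n v s (rr n i)])) (if j = i then mono [] else pzero)
      = (rel n (KB, j, i) :: xsym list \<Rightarrow> 'k::field)"
if "v = mtr umat" "j \<in> idx n" "i \<in> idx n"
proof -
  let ?F = "\<lambda>t. mono (wf n KB j i t) :: xsym list \<Rightarrow> 'k::field"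
  have "psum (idx n) (\<lambda>s. mono [v j (rr n s), mdag n v s (rr n i)]) = psum (idx n) (\<lambda>s. ?F (rr n s))"
    using that by (intro psum_cong) (auto simp: umat_def mtr_def mdag_def rr_rr)
  also have "\<dots> = psum (idx n) ?F" by (rule psum_rr)
  finally have E: "psum (idx n) (\<lambda>s. mono [v j (rr n s), mdag n v s (rr n i)]) = psum (idx n) ?F" .
  show ?thesis unfolding rel.simps Rel_def E by simp
qed

lemma relC: "psub (psum (idx n) (\<lambda>s. mono [v j (rr n s), mdag n v s (rr n i)])) (if j = i then mono [] else pzero)
      = (rel n (KC, rr n j, rr n i) :: xsym list \<Rightarrow> 'k::field)"
if "v = mstar n umat" "j \<in> idx n" "i \<in> idx n"
proof -
  have E: "psum (idx n) (\<lambda>s. mono [v j (rr n s), mdag n v s (rr n i)]) = psum (idx n) (\<lambda>s. mono (wf n KC (rr n j) (rr n i) s))"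
    using that by (intro psum_cong) (auto simp: umat_def mstar_def mdag_def rr_rr rr_idx)
  show ?thesis unfolding rel.simps Rel_def E using that by (simp add: rr_inj)
qed

lemma relD: "psub (psum (idx n) (\<lambda>s. mono [v j (rr n s), mdag n v s (rr n i)])) (if j = i then mono [] else pzero)
      = (rel n (KD, rr n j, rr n i) :: xsym list \<Rightarrow> 'k::field)"
if "v = mdag n umat" "j \<in> idx n" "i \<in> idx n"
proof -
  have E: "psum (idx n) (\<lambda>s. mono [v j (rr n s), mdag n v s (rr n i)]) = psum (idx n) (\<lambda>s. mono (wf n KD (rr n j) (rr n i) s))"
    using that by (intro psum_cong) (auto simp: umat_def mdag_def rr_rr rr_idx)
  show ?thesis unfolding rel.simps Rel_def E using that by (simp add: rr_inj)
qed

lemma Rrel_eq: "(Rrel n :: (xsym list \<Rightarrow> 'k::field) set) = rel n ` Qs n"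
proof
  show "(Rrel n :: (xsym list \<Rightarrow> 'k::field) set) \<subseteq> rel n ` Qs n"
  proof
    fix p :: "xsym list \<Rightarrow> 'k" assume "p \<in> Rrel n"
    then obtain v j i where p: "p = psub (psum (idx n) (\<lambda>s. mono [v j (rr n s), mdag n v s (rr n i)])) (if j = i then mono [] else pzero)"
      and v: "v \<in> Mset n" and ji: "j \<in> idx n" "i \<in> idx n" unfolding Rrel_def by auto
    from v consider "v = umat" | "v = mtr umat" | "v = mstar n umat" | "v = mdag n umat"
      unfolding Mset_def by auto
    then show "p \<in> rel n ` Qs n"
    proof cases
      case 1 show ?thesis unfolding p relA[OF 1 ji] by (rule image_eqI[OF refl], rule Qs_memI[OF ji])
    next
      case 2 show ?thesis unfolding p relB[OF 2 ji] by (rule image_eqI[OF refl], rule Qs_memI[OF ji])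
    next
      case 3 show ?thesis unfolding p relC[OF 3 ji] by (rule image_eqI[OF refl], rule Qs_memI[OF rr_idx[OF ji(1)] rr_idx[OF ji(2)]])
    next
      case 4 show ?thesis unfolding p relD[OF 4 ji] by (rule image_eqI[OF refl], rule Qs_memI[OF rr_idx[OF ji(1)] rr_idx[OF ji(2)]])
    qed
  qed
next
  show "rel n ` Qs n \<subseteq> (Rrel n :: (xsym list \<Rightarrow> 'k::field) set)"
  proof
    fix p :: "xsym list \<Rightarrow> 'k" assume "p \<in> rel n ` Qs n"
    then obtain k j i where p: "p = rel n (k, j, i)" and ji: "j \<in> idx n" "i \<in> idx n"
      unfolding Qs_def by auto
    have M: "umat \<in> Mset n" "mtr umat \<in> Mset n" "mstar n umat \<in> Mset n" "mdag n umat \<in> Mset n"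
      unfolding Mset_def by auto
    show "p \<in> Rrel n"
    proof (cases k)
      case KA show ?thesis by (rule Rrel_memI[OF M(1) ji]) (simp only: p KA relA[OF refl ji])
    next
      case KB show ?thesis by (rule Rrel_memI[OF M(2) ji]) (simp only: p KB relB[OF refl ji])
    next
      case KC
      have pp: "p = rel n (KC, rr n (rr n j), rr n (rr n i))" using p KC ji by (simp add: rr_rr)
      show ?thesis by (rule Rrel_memI[OF M(3) rr_idx[OF ji(1)] rr_idx[OF ji(2)]])
        (simp only: pp relC[OF refl rr_idx[OF ji(1)] rr_idx[OF ji(2)]])
    next
      case KD
      have pp: "p = rel n (KD, rr n (rr n j), rr n (rr n i))" using p KD ji by (simp add: rr_rr)
      show ?thesis by (rule Rrel_memI[OF M(4) rr_idx[OF ji(1)] rr_idx[OF ji(2)]])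
        (simp only: pp relD[OF refl rr_idx[OF ji(1)] rr_idx[OF ji(2)]])
    qed
  qed
qed

lemma tipgen_eq: "tip_generators n = tipw n ` Qs n"
proof -
  have A: "[v j n, mdag n v 1 (rr n i)] = tipw n (KA, j, i)" if "v = umat" "i \<in> idx n" for v j i
    using that by (simp add: umat_def mdag_def rr_rr)
  have B: "[v j n, mdag n v 1 (rr n i)] = tipw n (KB, j, i)" if "v = mtr umat" "i \<in> idx n" for v j i
    using that by (simp add: umat_def mtr_def mdag_def rr_rr)
  have C: "[v j n, mdag n v 1 (rr n i)] = tipw n (KC, rr n j, rr n i)" if "v = mstar n umat" "i \<in> idx n" for v j i
    using that by (simp add: umat_def mstar_def mdag_def rr_rr)
  have D: "[v j n, mdag n v 1 (rr n i)] = tipw n (KD, rr n j, rr n i)" if "v = mdag n umat" "i \<in> idx n" for v j i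
    using that by (simp add: umat_def mdag_def rr_rr)
  have M: "umat \<in> Mset n" "mtr umat \<in> Mset n" "mstar n umat \<in> Mset n" "mdag n umat \<in> Mset n"
    unfolding Mset_def by auto
  show ?thesis
  proof
    show "tip_generators n \<subseteq> tipw n ` Qs n"
    proof
      fix p assume "p \<in> tip_generators n"
      then obtain v j i where p: "p = [v j n, mdag n v 1 (rr n i)]"
        and v: "v \<in> Mset n" and ji: "j \<in> idx n" "i \<in> idx n" unfolding tip_generators_def by auto
      from v consider "v = umat" | "v = mtr umat" | "v = mstar n umat" | "v = mdag n umat"
        unfolding Mset_def by auto
      then show "p \<in> tipw n ` Qs n"
      proof cases
        case 1 show ?thesis unfolding p A[OF 1 ji(2)] by (rule image_eqI[OF refl], rule Qs_memI[OF ji])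
      next
        case 2 show ?thesis unfolding p B[OF 2 ji(2)] by (rule image_eqI[OF refl], rule Qs_memI[OF ji])
      next
        case 3 show ?thesis unfolding p C[OF 3 ji(2)] by (rule image_eqI[OF refl], rule Qs_memI[OF rr_idx[OF ji(1)] rr_idx[OF ji(2)]])
      next
        case 4 show ?thesis unfolding p D[OF 4 ji(2)] by (rule image_eqI[OF refl], rule Qs_memI[OF rr_idx[OF ji(1)] rr_idx[OF ji(2)]])
      qed
    qed
  next
    show "tipw n ` Qs n \<subseteq> tip_generators n"
    proof
      fix p assume "p \<in> tipw n ` Qs n"
      then obtain k j i where p: "p = tipw n (k, j, i)" and ji: "j \<in> idx n" "i \<in> idx n"
        unfolding Qs_def by auto
      show "p \<in> tip_generators n"
      proof (cases k)
        case KA show ?thesis by (rule tipgen_memI[OF M(1) ji]) (simp only: p KA A[OF refl ji(2)])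
      next
        case KB show ?thesis by (rule tipgen_memI[OF M(2) ji]) (simp only: p KB B[OF refl ji(2)])
      next
        case KC
        have pp: "p = tipw n (KC, rr n (rr n j), rr n (rr n i))" using p KC ji by (simp add: rr_rr)
        show ?thesis by (rule tipgen_memI[OF M(3) rr_idx[OF ji(1)] rr_idx[OF ji(2)]])
          (simp only: pp C[OF refl rr_idx[OF ji(2)]])
      next
        case KD
        have pp: "p = tipw n (KD, rr n (rr n j), rr n (rr n i))" using p KD ji by (simp add: rr_rr)
        show ?thesis by (rule tipgen_memI[OF M(4) rr_idx[OF ji(1)] rr_idx[OF ji(2)]])
          (simp only: pp D[OF refl rr_idx[OF ji(2)]])
      qed
    qed
  qed
qed


lemma Xn_simps[simp]: "U j i \<in> Xn n \<longleftrightarrow> j \<in> idx n \<and> i \<in> idx n" "Us j i \<in> Xn n \<longleftrightarrow> j \<in> idx n \<and> i \<in> idx n"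
  by (auto simp: Xn_def)

lemma finite_Xn: "finite (Xn n)"
proof -
  have "Xn n = (\<lambda>(j, i). U j i) ` (idx n \<times> idx n) \<union> (\<lambda>(j, i). Us j i) ` (idx n \<times> idx n)"
    by (auto simp: Xn_def)
  then show ?thesis by (simp add: idx_def)
qed

lemma words_simps[simp]: "[] \<in> words n" "x # w \<in> words n \<longleftrightarrow> x \<in> Xn n \<and> w \<in> words n"
  "w @ w' \<in> words n \<longleftrightarrow> w \<in> words n \<and> w' \<in> words n"
  by (auto simp: words_def)

lemma idx_simps[simp]: "n \<ge> 1 \<Longrightarrow> n \<in> idx n" "n \<ge> 1 \<Longrightarrow> 1 \<in> idx n" "n \<ge> 1 \<Longrightarrow> Suc 0 \<in> idx n"
  by (auto simp: idx_def)

lemma Rel_supp: "Rel n f c u \<noteq> (0::'k::field) \<Longrightarrow> u = [] \<or> (\<exists>t\<in>idx n. u = f t)"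
proof (rule ccontr)
  assume H: "(Rel n f c u :: 'k) \<noteq> 0" "\<not> (u = [] \<or> (\<exists>t\<in>idx n. u = f t))"
  have "(Rel n f c u :: 'k) = (\<Sum>t\<in>idx n. 0) - 0"
    unfolding Rel_def psub_def psum_def mono_def pzero_def using H(2)
    by (intro arg_cong2[where f = minus] sum.cong) auto
  then show False using H(1) by simp
qed

lemma Rel_tip:
  assumes "inj f" "t0 \<in> idx n" "f t0 \<noteq> []"
  shows "Rel n f c (f t0) = (1::'k::field)"
proof -
  have "Rel n f c (f t0) = (\<Sum>t\<in>idx n. if t = t0 then (1::'k) else 0) - 0"
    unfolding Rel_def psub_def psum_def mono_def pzero_def using assms
    by (intro arg_cong2[where f = minus] sum.cong) (auto dest: injD)
  also have "\<dots> = 1" using assms(2) by (simp add: idx_def)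
  finally show ?thesis .
qed

lemma inj_wf: "inj (wf n k j i)"
  by (cases k) (auto simp: inj_def)

lemma Qs_D: "q \<in> Qs n \<Longrightarrow> \<exists>k j i. q = (k, j, i) \<and> j \<in> idx n \<and> i \<in> idx n"
  by (auto simp: Qs_def)

lemma rel_tip: assumes "q \<in> Qs n" "n \<ge> 1" shows "rel n q (tipw n q) = (1::'k::field)"
proof -
  obtain k j i where q: "q = (k, j, i)" using Qs_D[OF assms(1)] by blast
  show ?thesis
  proof (cases k)
    case KA then show ?thesis using q Rel_tip[OF inj_wf[of n KA j i], of n n] assms by simp
  next
    case KB then show ?thesis using q Rel_tip[OF inj_wf[of n KB j i], of n n] assms by simp
  next
    case KC then show ?thesis using q Rel_tip[OF inj_wf[of n KC j i], of 1 n] assms by simp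
  next
    case KD then show ?thesis using q Rel_tip[OF inj_wf[of n KD j i], of 1 n] assms by simp
  qed
qed

lemma rel_le: assumes "q \<in> Qs n" "rel n q u \<noteq> (0::'k::field)" shows "word_le u (tipw n q)"
proof -
  obtain k j i where q: "q = (k, j, i)" using Qs_D[OF assms(1)] by blast
  from assms(2) q have "u = [] \<or> (\<exists>t\<in>idx n. u = wf n k j i t)"
    using Rel_supp[of n "wf n k j i" "j = i" u] by simp
  then show ?thesis
  proof
    assume "u = []" then show ?thesis using q by (cases k) (auto intro!: wl_imp_le wl_length)
  next
    assume "\<exists>t\<in>idx n. u = wf n k j i t"
    then obtain t where t: "t \<in> idx n" "u = wf n k j i t" by blast
    show ?thesis
    proof (cases "t = (if k = KA \<or> k = KB then n else 1)")
      case True then show ?thesis using q t by (cases k) auto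
    next
      case False
      then show ?thesis using q t
        by (cases k) (auto simp: idx_def word_le_def intro!: wl_cons_first)
    qed
  qed
qed

lemma rel_fin: "finite {u. rel n q u \<noteq> (0::'k::field)}"
proof -
  obtain k j i where q: "q = (k, j, i)" by (cases q) auto
  have "{u. rel n q u \<noteq> (0::'k)} \<subseteq> insert [] (wf n k j i ` idx n)"
    using Rel_supp[of n "wf n k j i" "j = i"] q by auto
  then show ?thesis by (rule finite_subset) (simp add: idx_def)
qed

lemma rel_words: "q \<in> Qs n \<Longrightarrow> rel n q u \<noteq> (0::'k::field) \<Longrightarrow> u \<in> words n"
proof -
  assume a: "q \<in> Qs n" "rel n q u \<noteq> (0::'k::field)"
  obtain k j i where q: "q = (k, j, i)" "j \<in> idx n" "i \<in> idx n" using Qs_D[OF a(1)] by blast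
  have "u = [] \<or> (\<exists>t\<in>idx n. u = wf n k j i t)"
    using Rel_supp[of n "wf n k j i" "j = i" u] a(2) q by simp
  then show ?thesis using q by (cases k) auto
qed

lemma tipw_words: assumes "q \<in> Qs n" "n \<ge> 1" shows "tipw n q \<in> words n"
proof -
  obtain k j i where q: "q = (k, j, i)" "j \<in> idx n" "i \<in> idx n" using Qs_D[OF assms(1)] by blast
  then show ?thesis using assms(2) by (cases k) auto
qed

lemma tipw_len: "length (tipw n q) = 2"
proof -
  obtain k j i where q: "q = (k, j, i)" by (cases q) auto
  then show ?thesis by (cases k) auto
qed

lemma rel_alg: "q \<in> Qs n \<Longrightarrow> (rel n q :: xsym list \<Rightarrow> 'k::field) \<in> alg n"
  unfolding alg_def using rel_fin[of n q] rel_words[of q n] by auto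

lemma mono_alg: "a \<in> words n \<Longrightarrow> (mono a :: xsym list \<Rightarrow> 'k::field) \<in> alg n"
  unfolding alg_def mono_def by (auto simp: finite_subset[of _ "{a}"])

section \<open>Spans of shifted relations\<close>

inductive_set Kset :: "nat \<Rightarrow> (xsym list \<Rightarrow> bool) \<Rightarrow> (xsym list \<Rightarrow> 'k::field) set"
  for n :: nat and P :: "xsym list \<Rightarrow> bool" where
  Kz: "pzero \<in> Kset n P"
| Kg: "a \<in> words n \<Longrightarrow> b \<in> words n \<Longrightarrow> q \<in> Qs n \<Longrightarrow> P (a @ tipw n q @ b) \<Longrightarrow>
       smul c (sh a (rel n q) b) \<in> Kset n P"
| Ka: "p \<in> Kset n P \<Longrightarrow> p' \<in> Kset n P \<Longrightarrow> padd p p' \<in> Kset n P"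

abbreviation Kle where "Kle n w \<equiv> Kset n (\<lambda>u. word_le u w)"
abbreviation Ilt where "Ilt n w \<equiv> Kset n (\<lambda>u. word_less u w)"

lemma smul_one[simp]: "smul 1 p = p" by (simp add: smul_def)
lemma smul_smul: "smul c (smul d p) = smul (c * d) p" by (simp add: smul_def mult.assoc)
lemma smul_padd: "smul c (padd p q) = padd (smul c p) (smul c q)"
  by (simp add: smul_def padd_def algebra_simps)

lemma K_mono: "p \<in> Kset n P \<Longrightarrow> (\<And>u. P u \<Longrightarrow> P' u) \<Longrightarrow> p \<in> Kset n P'"
  by (induction rule: Kset.induct) (auto intro: Kset.intros)

lemma K_gen1: "a \<in> words n \<Longrightarrow> b \<in> words n \<Longrightarrow> q \<in> Qs n \<Longrightarrow> P (a @ tipw n q @ b) \<Longrightarrow>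
       sh a (rel n q) b \<in> Kset n P"
  using Kg[of a n b q P 1] by simp

lemma K_smul: "p \<in> Kset n P \<Longrightarrow> smul c p \<in> Kset n P"
  by (induction rule: Kset.induct) (auto intro: Kset.intros simp: smul_smul smul_padd)

lemma K_psub: "p \<in> Kset n P \<Longrightarrow> p' \<in> Kset n P \<Longrightarrow> psub p p' \<in> Kset n P"
  unfolding psub_as_padd by (intro Ka K_smul)

lemma K_psum: "finite A \<Longrightarrow> (\<And>a. a \<in> A \<Longrightarrow> f a \<in> Kset n P) \<Longrightarrow> psum A f \<in> Kset n P"
  by (induction rule: finite_induct) (auto intro: Kset.intros simp: psum_insert)

lemma K_supp: fixes p :: "xsym list \<Rightarrow> 'k::field"
  shows "p \<in> Kset n P \<Longrightarrow> p u \<noteq> 0 \<Longrightarrow> \<exists>v. P v \<and> word_le u v"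
proof (induction rule: Kset.induct)
  case Kz then show ?case by (simp add: pzero_def)
next
  case (Kg a b q c)
  then have "(sh a (rel n q) b u :: 'k) \<noteq> 0" by (simp add: smul_def)
  then obtain v where v1: "u = a @ v @ b" using sh_nonapp[of u a b "rel n q"] by blast
  have v: "u = a @ v @ b" "(rel n q v :: 'k) \<noteq> 0" using v1 \<open>(sh a (rel n q) b u :: 'k) \<noteq> 0\<close> by auto
  then have "word_le u (a @ tipw n q @ b)" using rel_le[OF Kg(3) v(2)] wle_app by blast
  then show ?case using Kg(4) by blast
next
  case (Ka p p')
  then show ?case by (cases "p u = 0") (simp_all add: padd_def)
qed

lemma Kle_supp: "p \<in> Kle n w \<Longrightarrow> p u \<noteq> 0 \<Longrightarrow> word_le u w"
  using K_supp wle_trans by blast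

lemma Ilt_supp: "p \<in> Ilt n w \<Longrightarrow> p u \<noteq> 0 \<Longrightarrow> word_less u w"
  using K_supp wle_less_trans by blast

lemma K_shift: "p \<in> Kset n P \<Longrightarrow> a \<in> words n \<Longrightarrow> b \<in> words n \<Longrightarrow>
    sh a p b \<in> Kset n (\<lambda>u. \<exists>v. P v \<and> u = a @ v @ b)"
proof (induction rule: Kset.induct)
  case Kz then show ?case by (simp add: Kset.Kz)
next
  case (Kg a' b' q c)
  have "sh a (smul c (sh a' (rel n q) b')) b = smul c (sh (a @ a') (rel n q) (b' @ b))"
    by (simp add: sh_smul sh_sh)
  moreover have "smul c (sh (a @ a') (rel n q) (b' @ b)) \<in> Kset n (\<lambda>u. \<exists>v. P v \<and> u = a @ v @ b)"
    using Kg by (intro Kset.Kg) auto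
  ultimately show ?case by simp
next
  case (Ka p p')
  then show ?case by (simp add: sh_padd Kset.Ka)
qed

lemma Ilt_shift: "p \<in> Ilt n w \<Longrightarrow> a \<in> words n \<Longrightarrow> b \<in> words n \<Longrightarrow> sh a p b \<in> Ilt n (a @ w @ b)"
  by (rule K_mono[OF K_shift]) (auto intro: wl_app)


lemma sh_Rel: "sh a (Rel n f c) b = psub (psum (idx n) (\<lambda>t. mono (a @ f t @ b))) (if c then mono (a @ b) else pzero)"
  unfolding Rel_def by (simp add: sh_psub sh_psum sh_mono)

lemma GL_main:
  fixes F :: "nat \<Rightarrow> nat \<Rightarrow> 'k::field"
  assumes "finite I" "p \<in> I" "q \<in> I"
  shows "(\<Sum>t\<in>I. F q t) - (\<Sum>s\<in>I. F s p) = (\<Sum>t\<in>I-{p}. \<Sum>s\<in>I. F s t) - (\<Sum>s\<in>I-{q}. \<Sum>t\<in>I. F s t)"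
proof -
  have A: "(\<Sum>t\<in>I-{p}. \<Sum>s\<in>I. F s t) = (\<Sum>t\<in>I. \<Sum>s\<in>I. F s t) - (\<Sum>s\<in>I. F s p)"
    using assms by (simp add: sum_diff1)
  have B: "(\<Sum>s\<in>I-{q}. \<Sum>t\<in>I. F s t) = (\<Sum>s\<in>I. \<Sum>t\<in>I. F s t) - (\<Sum>t\<in>I. F q t)"
    using assms by (simp add: sum_diff1)
  have C: "(\<Sum>t\<in>I. \<Sum>s\<in>I. F s t) = (\<Sum>s\<in>I. \<Sum>t\<in>I. F s t)" by (rule sum.swap)
  show ?thesis unfolding A B C by simp
qed

lemma GL_ovl:
  fixes F :: "nat \<Rightarrow> nat \<Rightarrow> 'k::field"
  assumes "finite I" "p \<in> I" "q \<in> I"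
    "(\<Sum>t\<in>I-{p}. dA t) - (\<Sum>s\<in>I-{q}. dB s) = cA - cB"
  shows "((\<Sum>t\<in>I. F q t) - cA) - ((\<Sum>s\<in>I. F s p) - cB)
       = (\<Sum>t\<in>I-{p}. (\<Sum>s\<in>I. F s t) - dA t) - (\<Sum>s\<in>I-{q}. (\<Sum>t\<in>I. F s t) - dB s)"
  using GL_main[OF assms(1-3), of F] assms(4) by (simp add: sum_subtractf algebra_simps)

lemma sum_delta_minus:
  "finite I \<Longrightarrow> (\<Sum>t\<in>I-{p}. if t = k then g t else 0) = (if k \<in> I \<and> k \<noteq> p then g k else (0::'k::field))"
  by (simp add: sum.delta')

lemma psum_split: "finite S \<Longrightarrow> x \<in> S \<Longrightarrow> psum S f = padd (f x) (psum (S - {x}) f)"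
  using psum_insert[of "S - {x}" x f] by (simp add: insert_absorb)

lemma fin_idx[simp]: "finite (idx n)" by (simp add: idx_def)

lemma SAME_AB:
  assumes "n \<ge> 1"
  shows "psub (rel n (KA, n, n)) (rel n (KB, n, n)) =
    (psum (idx n - {n}) (\<lambda>t. psub (rel n (KB, t, t)) (rel n (KA, t, t))) :: xsym list \<Rightarrow> 'k::field)"
proof
  fix w
  let ?F = "\<lambda>s t. mono [U s t, Us s t] w :: 'k" and ?c = "mono [] w :: 'k"
  have "((\<Sum>t\<in>idx n. ?F n t) - ?c) - ((\<Sum>s\<in>idx n. ?F s n) - ?c)
       = (\<Sum>t\<in>idx n-{n}. (\<Sum>s\<in>idx n. ?F s t) - ?c) - (\<Sum>s\<in>idx n-{n}. (\<Sum>t\<in>idx n. ?F s t) - ?c)"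
    using assms by (intro GL_ovl) auto
  then show "(psub (rel n (KA, n, n)) (rel n (KB, n, n)) w :: 'k) =
    psum (idx n - {n}) (\<lambda>t. psub (rel n (KB, t, t)) (rel n (KA, t, t))) w"
    by (simp add: Rel_def psub_def psum_def sum_subtractf)
qed

lemma SAME_CD:
  assumes "n \<ge> 1"
  shows "psub (rel n (KC, 1, 1)) (rel n (KD, 1, 1)) =
    (psum (idx n - {1}) (\<lambda>t. psub (rel n (KD, t, t)) (rel n (KC, t, t))) :: xsym list \<Rightarrow> 'k::field)"
proof
  fix w
  let ?F = "\<lambda>s t. mono [Us s t, U s t] w :: 'k" and ?c = "mono [] w :: 'k"
  have "((\<Sum>t\<in>idx n. ?F 1 t) - ?c) - ((\<Sum>s\<in>idx n. ?F s 1) - ?c)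
       = (\<Sum>t\<in>idx n-{1}. (\<Sum>s\<in>idx n. ?F s t) - ?c) - (\<Sum>s\<in>idx n-{1}. (\<Sum>t\<in>idx n. ?F s t) - ?c)"
    using assms by (intro GL_ovl) auto
  then show "(psub (rel n (KC, 1, 1)) (rel n (KD, 1, 1)) w :: 'k) =
    psum (idx n - {1}) (\<lambda>t. psub (rel n (KD, t, t)) (rel n (KC, t, t))) w"
    by (simp add: Rel_def psub_def psum_def sum_subtractf)
qed

lemma K_rel: "q \<in> Qs n \<Longrightarrow> P (tipw n q) \<Longrightarrow> rel n q \<in> Kset n P"
  using K_gen1[of "[]" n "[]" q P] by simp

lemma K_swap: "psub p q \<in> Kset n P \<Longrightarrow> psub q p \<in> Kset n P"
proof -
  assume "psub p q \<in> Kset n P"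
  then have "smul (-1) (psub p q) \<in> Kset n P" by (rule K_smul)
  moreover have "smul (-1) (psub p q) = psub q p" by (auto simp: smul_def psub_def)
  ultimately show ?thesis by simp
qed

lemma psub_self: "psub p p = pzero" by (auto simp: psub_def pzero_def)

lemma idx_minus: "t \<in> idx n - {n} \<Longrightarrow> t < n" "t \<in> idx n - {1} \<Longrightarrow> 1 < t" "t \<in> idx n \<Longrightarrow> t \<in> idx n"
  by (auto simp: idx_def)

lemma SAME:
  assumes "n \<ge> 2" "q \<in> Qs n" "q' \<in> Qs n" "tipw n q = tipw n q'"
  shows "psub (rel n q) (rel n q') \<in> (Ilt n (tipw n q) :: (xsym list \<Rightarrow> 'k::field) set)"
proof (cases "q = q'")
  case True then show ?thesis by (simp add: psub_self Kset.Kz)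
next
  case False
  obtain k j i where q: "q = (k, j, i)" "j \<in> idx n" "i \<in> idx n" using Qs_D[OF assms(2)] by blast
  obtain k' j' i' where q': "q' = (k', j', i')" "j' \<in> idx n" "i' \<in> idx n" using Qs_D[OF assms(3)] by blast
  have n1: "n \<ge> 1" using assms(1) by simp
  have AB: "psub (rel n (KA, n, n)) (rel n (KB, n, n)) \<in> (Ilt n [U n n, Us n n] :: (xsym list \<Rightarrow> 'k::field) set)"
    unfolding SAME_AB[OF n1]
  proof (intro K_psum)
    fix t assume t: "t \<in> idx n - {n}"
    then have "t < n" "t \<in> idx n" by (auto simp: idx_def)
    then show "psub (rel n (KB, t, t)) (rel n (KA, t, t)) \<in> (Ilt n [U n n, Us n n] :: (xsym list \<Rightarrow> 'k::field) set)"
      using n1 by (intro K_psub K_rel) (auto simp: Qs_def intro!: wl_cons_first)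
  qed simp
  have CD: "psub (rel n (KC, 1, 1)) (rel n (KD, 1, 1)) \<in> (Ilt n [Us 1 1, U 1 1] :: (xsym list \<Rightarrow> 'k::field) set)"
    unfolding SAME_CD[OF n1]
  proof (intro K_psum)
    fix t assume t: "t \<in> idx n - {1}"
    then have "1 < t" "t \<in> idx n" by (auto simp: idx_def)
    then show "psub (rel n (KD, t, t)) (rel n (KC, t, t)) \<in> (Ilt n [Us 1 1, U 1 1] :: (xsym list \<Rightarrow> 'k::field) set)"
      using n1 by (intro K_psub K_rel) (auto simp: Qs_def intro!: wl_cons_first)
  qed simp
  show ?thesis
    using assms(4) False AB CD K_swap[OF AB] K_swap[OF CD] q q'
    by (cases k; cases k') auto
qed

lemma sh_Rel_app: "sh a (Rel n f c) b w = (\<Sum>t\<in>idx n. mono (a @ f t @ b) w) - (if c then mono (a @ b) w else (0::'k::field))"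
  by (simp add: sh_Rel psub_def psum_def pzero_def)

lemma psub_app: "psub p q w = p w - q w" by (simp add: psub_def)
lemma psum_app: "psum A f w = (\<Sum>a\<in>A. f a w)" by (simp add: psum_def)

lemma O1_id:
  assumes "n \<ge> 2" "j \<in> idx n" "b \<in> idx n"
  shows "psub (sh [] (rel n (KA, j, 1)) [U 1 b]) (sh [U j n] (rel n (KD, n, b)) []) =
    (psub (psum (idx n - {n}) (\<lambda>t. sh [U j t] (rel n (KD, t, b)) []))
          (psum (idx n - {1}) (\<lambda>s. sh [] (rel n (KA, j, s)) [U s b])) :: xsym list \<Rightarrow> 'k::field)"
proof
  fix w
  have c: "(\<Sum>t\<in>idx n-{n}. if t = b then mono [U j t] w else (0::'k)) - (\<Sum>s\<in>idx n-{1}. if j = s then mono [U s b] w else 0)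
     = (if j = 1 then mono [U 1 b] w else 0) - (if n = b then mono [U j n] w else 0)"
    using assms by (cases "j = 1"; cases "b = n") (auto simp: sum.delta sum.delta')
  note E = GL_ovl[where I="idx n" and p=n and q=1 and F="\<lambda>s t. mono [U j t, Us s t, U s b] w"
    and dA="\<lambda>t. if t = b then mono [U j t] w else 0" and dB="\<lambda>s. if j = s then mono [U s b] w else 0"
    and cA="if j = 1 then mono [U 1 b] w else 0" and cB="if n = b then mono [U j n] w else 0", OF fin_idx _ _ c]
  show "(psub (sh [] (rel n (KA, j, 1)) [U 1 b]) (sh [U j n] (rel n (KD, n, b)) []) w :: 'k) =
    psub (psum (idx n - {n}) (\<lambda>t. sh [U j t] (rel n (KD, t, b)) []))
          (psum (idx n - {1}) (\<lambda>s. sh [] (rel n (KA, j, s)) [U s b])) w"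
    unfolding psub_app psum_app sh_Rel_app rel.simps wf.simps append.simps append_Nil2 by (rule E) (use assms in auto)
qed

lemma O2_id:
  assumes "n \<ge> 2" "j \<in> idx n" "b \<in> idx n"
  shows "psub (sh [] (rel n (KB, j, 1)) [U b 1]) (sh [U n j] (rel n (KC, n, b)) []) =
    (psub (psum (idx n - {n}) (\<lambda>t. sh [U t j] (rel n (KC, t, b)) []))
          (psum (idx n - {1}) (\<lambda>s. sh [] (rel n (KB, j, s)) [U b s])) :: xsym list \<Rightarrow> 'k::field)"
proof
  fix w
  have c: "(\<Sum>t\<in>idx n-{n}. if t = b then mono [U t j] w else 0 :: 'k) - (\<Sum>s\<in>idx n-{1}. if j = s then mono [U b s] w else 0) = (if j = 1 then mono [U b 1] w else 0) - (if n = b then mono [U n j] w else 0)"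
    using assms by (cases "j = 1"; cases "b = n") (auto simp: sum.delta sum.delta')
  note E = GL_ovl[where I="idx n" and p=n and q=1 and F="\<lambda>s t. mono [U t j, Us t s, U b s] w"
    and dA="\<lambda>t. if t = b then mono [U t j] w else 0" and dB="\<lambda>s. if j = s then mono [U b s] w else 0" and cA="if j = 1 then mono [U b 1] w else 0" and cB="if n = b then mono [U n j] w else 0", OF fin_idx _ _ c]
  show "(psub (sh [] (rel n (KB, j, 1)) [U b 1]) (sh [U n j] (rel n (KC, n, b)) []) w :: 'k) =
    psub (psum (idx n - {n}) (\<lambda>t. sh [U t j] (rel n (KC, t, b)) []))
          (psum (idx n - {1}) (\<lambda>s. sh [] (rel n (KB, j, s)) [U b s])) w"
    unfolding psub_app psum_app sh_Rel_app rel.simps wf.simps append.simps append_Nil2 by (rule E) (use assms in auto)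
qed

lemma O3_id:
  assumes "n \<ge> 2" "a \<in> idx n" "i \<in> idx n"
  shows "psub (sh [] (rel n (KC, a, n)) [Us n i]) (sh [Us a 1] (rel n (KB, 1, i)) []) =
    (psub (psum (idx n - {1}) (\<lambda>t. sh [Us a t] (rel n (KB, t, i)) []))
          (psum (idx n - {n}) (\<lambda>s. sh [] (rel n (KC, a, s)) [Us s i])) :: xsym list \<Rightarrow> 'k::field)"
proof
  fix w
  have c: "(\<Sum>t\<in>idx n-{1}. if t = i then mono [Us a t] w else 0 :: 'k) - (\<Sum>s\<in>idx n-{n}. if a = s then mono [Us s i] w else 0) = (if a = n then mono [Us n i] w else 0) - (if 1 = i then mono [Us a 1] w else 0)"
    using assms by (cases "a = n"; cases "i = 1") (auto simp: sum.delta sum.delta')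
  note E = GL_ovl[where I="idx n" and p=1 and q=n and F="\<lambda>s t. mono [Us a t, U s t, Us s i] w"
    and dA="\<lambda>t. if t = i then mono [Us a t] w else 0" and dB="\<lambda>s. if a = s then mono [Us s i] w else 0" and cA="if a = n then mono [Us n i] w else 0" and cB="if 1 = i then mono [Us a 1] w else 0", OF fin_idx _ _ c]
  show "(psub (sh [] (rel n (KC, a, n)) [Us n i]) (sh [Us a 1] (rel n (KB, 1, i)) []) w :: 'k) =
    psub (psum (idx n - {1}) (\<lambda>t. sh [Us a t] (rel n (KB, t, i)) []))
          (psum (idx n - {n}) (\<lambda>s. sh [] (rel n (KC, a, s)) [Us s i])) w"
    unfolding psub_app psum_app sh_Rel_app rel.simps wf.simps append.simps append_Nil2 by (rule E) (use assms in auto)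
qed

lemma O4_id:
  assumes "n \<ge> 2" "a \<in> idx n" "i \<in> idx n"
  shows "psub (sh [] (rel n (KD, a, n)) [Us i n]) (sh [Us 1 a] (rel n (KA, 1, i)) []) =
    (psub (psum (idx n - {1}) (\<lambda>t. sh [Us t a] (rel n (KA, t, i)) []))
          (psum (idx n - {n}) (\<lambda>s. sh [] (rel n (KD, a, s)) [Us i s])) :: xsym list \<Rightarrow> 'k::field)"
proof
  fix w
  have c: "(\<Sum>t\<in>idx n-{1}. if t = i then mono [Us t a] w else 0 :: 'k) - (\<Sum>s\<in>idx n-{n}. if a = s then mono [Us i s] w else 0) = (if a = n then mono [Us i n] w else 0) - (if 1 = i then mono [Us 1 a] w else 0)"
    using assms by (cases "a = n"; cases "i = 1") (auto simp: sum.delta sum.delta')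
  note E = GL_ovl[where I="idx n" and p=1 and q=n and F="\<lambda>s t. mono [Us t a, U t s, Us i s] w"
    and dA="\<lambda>t. if t = i then mono [Us t a] w else 0" and dB="\<lambda>s. if a = s then mono [Us i s] w else 0" and cA="if a = n then mono [Us i n] w else 0" and cB="if 1 = i then mono [Us 1 a] w else 0", OF fin_idx _ _ c]
  show "(psub (sh [] (rel n (KD, a, n)) [Us i n]) (sh [Us 1 a] (rel n (KA, 1, i)) []) w :: 'k) =
    psub (psum (idx n - {1}) (\<lambda>t. sh [Us t a] (rel n (KA, t, i)) []))
          (psum (idx n - {n}) (\<lambda>s. sh [] (rel n (KD, a, s)) [Us i s])) w"
    unfolding psub_app psum_app sh_Rel_app rel.simps wf.simps append.simps append_Nil2 by (rule E) (use assms in auto)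
qed

lemma wl3a: "sym_less x x' \<Longrightarrow> word_less [x, y, z] [x', y', z']"
  by (rule wl_cons_first) auto

lemma wl3b: "sym_less y y' \<Longrightarrow> word_less [x, y, z] [x, y', z']"
  by (rule wl_cons_same, rule wl_cons_first) auto

lemma OM1:
  assumes "n \<ge> 2" "j \<in> idx n" "b \<in> idx n"
  shows "psub (sh [] (rel n (KA, j, 1)) [U 1 b]) (sh [U j n] (rel n (KD, n, b)) [])
     \<in> (Ilt n [U j n, Us 1 n, U 1 b] :: (xsym list \<Rightarrow> 'k::field) set)"
  unfolding O1_id[OF assms]
proof (intro K_psub K_psum)
  fix t assume t: "t \<in> idx n - {n}"
  then have "t < n" "t \<in> idx n" by (auto simp: idx_def)
  then show "sh [U j t] (rel n (KD, t, b)) [] \<in> (Ilt n [U j n, Us 1 n, U 1 b] :: (xsym list \<Rightarrow> 'k::field) set)"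
    using assms by (intro K_gen1) (auto simp: Qs_def intro: wl3a)
next
  fix s assume t: "s \<in> idx n - {1}"
  then have "1 < s" "s \<in> idx n" by (auto simp: idx_def)
  then show "sh [] (rel n (KA, j, s)) [U s b] \<in> (Ilt n [U j n, Us 1 n, U 1 b] :: (xsym list \<Rightarrow> 'k::field) set)"
    using assms by (intro K_gen1) (auto simp: Qs_def intro: wl3b)
qed auto

lemma OM2:
  assumes "n \<ge> 2" "j \<in> idx n" "b \<in> idx n"
  shows "psub (sh [] (rel n (KB, j, 1)) [U b 1]) (sh [U n j] (rel n (KC, n, b)) [])
     \<in> (Ilt n [U n j, Us n 1, U b 1] :: (xsym list \<Rightarrow> 'k::field) set)"
  unfolding O2_id[OF assms]
proof (intro K_psub K_psum)
  fix t assume t: "t \<in> idx n - {n}"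
  then have "t < n" "t \<in> idx n" by (auto simp: idx_def)
  then show "sh [U t j] (rel n (KC, t, b)) [] \<in> (Ilt n [U n j, Us n 1, U b 1] :: (xsym list \<Rightarrow> 'k::field) set)"
    using assms by (intro K_gen1) (auto simp: Qs_def intro: wl3a)
next
  fix s assume t: "s \<in> idx n - {1}"
  then have "1 < s" "s \<in> idx n" by (auto simp: idx_def)
  then show "sh [] (rel n (KB, j, s)) [U b s] \<in> (Ilt n [U n j, Us n 1, U b 1] :: (xsym list \<Rightarrow> 'k::field) set)"
    using assms by (intro K_gen1) (auto simp: Qs_def intro: wl3b)
qed auto

lemma OM3:
  assumes "n \<ge> 2" "a \<in> idx n" "i \<in> idx n"
  shows "psub (sh [] (rel n (KC, a, n)) [Us n i]) (sh [Us a 1] (rel n (KB, 1, i)) [])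
     \<in> (Ilt n [Us a 1, U n 1, Us n i] :: (xsym list \<Rightarrow> 'k::field) set)"
  unfolding O3_id[OF assms]
proof (intro K_psub K_psum)
  fix t assume t: "t \<in> idx n - {1}"
  then have "1 < t" "t \<in> idx n" by (auto simp: idx_def)
  then show "sh [Us a t] (rel n (KB, t, i)) [] \<in> (Ilt n [Us a 1, U n 1, Us n i] :: (xsym list \<Rightarrow> 'k::field) set)"
    using assms by (intro K_gen1) (auto simp: Qs_def intro: wl3a)
next
  fix s assume t: "s \<in> idx n - {n}"
  then have "s < n" "s \<in> idx n" by (auto simp: idx_def)
  then show "sh [] (rel n (KC, a, s)) [Us s i] \<in> (Ilt n [Us a 1, U n 1, Us n i] :: (xsym list \<Rightarrow> 'k::field) set)"
    using assms by (intro K_gen1) (auto simp: Qs_def intro: wl3b)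
qed auto

lemma OM4:
  assumes "n \<ge> 2" "a \<in> idx n" "i \<in> idx n"
  shows "psub (sh [] (rel n (KD, a, n)) [Us i n]) (sh [Us 1 a] (rel n (KA, 1, i)) [])
     \<in> (Ilt n [Us 1 a, U 1 n, Us i n] :: (xsym list \<Rightarrow> 'k::field) set)"
  unfolding O4_id[OF assms]
proof (intro K_psub K_psum)
  fix t assume t: "t \<in> idx n - {1}"
  then have "1 < t" "t \<in> idx n" by (auto simp: idx_def)
  then show "sh [Us t a] (rel n (KA, t, i)) [] \<in> (Ilt n [Us 1 a, U 1 n, Us i n] :: (xsym list \<Rightarrow> 'k::field) set)"
    using assms by (intro K_gen1) (auto simp: Qs_def intro: wl3a)
next
  fix s assume t: "s \<in> idx n - {n}"
  then have "s < n" "s \<in> idx n" by (auto simp: idx_def)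
  then show "sh [] (rel n (KD, a, s)) [Us i s] \<in> (Ilt n [Us 1 a, U 1 n, Us i n] :: (xsym list \<Rightarrow> 'k::field) set)"
    using assms by (intro K_gen1) (auto simp: Qs_def intro: wl3b)
qed auto

lemma OVL:
  assumes "n \<ge> 2" "q \<in> Qs n" "q' \<in> Qs n" "tipw n q = [x, y]" "tipw n q' = [y, z]"
  shows "psub (sh [] (rel n q) [z]) (sh [x] (rel n q') []) \<in> (Ilt n [x, y, z] :: (xsym list \<Rightarrow> 'k::field) set)"
proof -
  obtain k j i where q: "q = (k, j, i)" "j \<in> idx n" "i \<in> idx n" using Qs_D[OF assms(2)] by blast
  obtain k' j' i' where q': "q' = (k', j', i')" "j' \<in> idx n" "i' \<in> idx n" using Qs_D[OF assms(3)] by blast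
  show ?thesis
    using assms(1,4,5) q q' OM1[OF assms(1)] OM2[OF assms(1)] OM3[OF assms(1)] OM4[OF assms(1)]
    by (cases k; cases k') auto
qed


lemma sh_decomp:
  assumes "finite S" "\<And>u. p u \<noteq> 0 \<Longrightarrow> u \<in> S"
  shows "sh a p b = psum S (\<lambda>u. smul (p u) (mono (a @ u @ b)))"
proof -
  have "sh a p b = sh a (psum S (\<lambda>u. smul (p u) (mono u))) b"
    by (rule arg_cong[where f="\<lambda>x. sh a x b", OF decomp[OF assms]])
  also have "\<dots> = psum S (\<lambda>u. smul (p u) (mono (a @ u @ b)))"
    by (simp add: sh_psum sh_smul sh_mono)
  finally show ?thesis .
qed

lemma DISJ:
  fixes r r' :: "xsym list \<Rightarrow> 'k::field"
  assumes n: "n \<ge> 1" and w: "a \<in> words n" "m \<in> words n" "b' \<in> words n" and q: "q \<in> Qs n" "q' \<in> Qs n"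
    and r: "r = rel n q" "r' = rel n q'"
  shows "psub (sh a r (m @ tipw n q' @ b')) (sh (a @ tipw n q @ m) r' b')
    \<in> Ilt n (a @ tipw n q @ m @ tipw n q' @ b')"
proof -
  let ?t = "tipw n q" and ?t' = "tipw n q'"
  let ?w = "a @ ?t @ m @ ?t' @ b'"
  define SP where "SP = {u. r u \<noteq> 0}"
  define SQ where "SQ = {v. r' v \<noteq> 0}"
  have fP: "finite SP" unfolding SP_def r by (rule rel_fin)
  have fQ: "finite SQ" unfolding SQ_def r by (rule rel_fin)
  have rt: "r ?t = 1" "r' ?t' = 1" using rel_tip[OF q(1) n] rel_tip[OF q(2) n] r by auto
  have tP: "?t \<in> SP" and tQ: "?t' \<in> SQ" using rt by (auto simp: SP_def SQ_def)
  define X1 where "X1 = psum SP (\<lambda>u. smul (r u) (sh (a @ u @ m) r' b'))"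
  define X2 where "X2 = psum SQ (\<lambda>v. smul (r' v) (sh a r (m @ v @ b')))"
  have X12: "X1 = X2"
  proof -
    have "X1 = psum SP (\<lambda>u. smul (r u) (psum SQ (\<lambda>v. smul (r' v) (mono ((a @ u @ m) @ v @ b')))))"
      unfolding X1_def using fQ by (intro psum_cong arg_cong[where f="smul _"] sh_decomp) (auto simp: SQ_def)
    moreover have "X2 = psum SQ (\<lambda>v. smul (r' v) (psum SP (\<lambda>u. smul (r u) (mono (a @ u @ m @ v @ b')))))"
      unfolding X2_def using fP by (intro psum_cong arg_cong[where f="smul _"] sh_decomp) (auto simp: SP_def)
    ultimately show ?thesis
      unfolding psum_def smul_def
      by (auto intro!: ext simp: sum_distrib_left algebra_simps intro: sum.swap)
  qed
  define Y1 where "Y1 = psum (SP - {?t}) (\<lambda>u. smul (r u) (sh (a @ u @ m) r' b'))"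
  define Y2 where "Y2 = psum (SQ - {?t'}) (\<lambda>v. smul (r' v) (sh a r (m @ v @ b')))"
  have "X1 = padd (smul (r ?t) (sh (a @ ?t @ m) r' b')) Y1"
    unfolding X1_def Y1_def by (rule psum_split[OF fP tP])
  then have X1': "X1 = padd (sh (a @ ?t @ m) r' b') Y1" using rt by simp
  have "X2 = padd (smul (r' ?t') (sh a r (m @ ?t' @ b'))) Y2"
    unfolding X2_def Y2_def by (rule psum_split[OF fQ tQ])
  then have X2': "X2 = padd (sh a r (m @ ?t' @ b')) Y2" using rt by simp
  have E: "psub (sh a r (m @ ?t' @ b')) (sh (a @ ?t @ m) r' b') = psub Y1 Y2"
  proof
    fix u
    have "X1 u = X2 u" using X12 by simp
    then show "psub (sh a r (m @ ?t' @ b')) (sh (a @ ?t @ m) r' b') u = psub Y1 Y2 u"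
      unfolding X1' X2' by (simp add: padd_def psub_def algebra_simps)
  qed
  have Y1I: "Y1 \<in> Ilt n ?w" unfolding Y1_def
  proof (intro K_psum)
    fix u assume u: "u \<in> SP - {?t}"
    then have "r u \<noteq> 0" "u \<noteq> ?t" by (auto simp: SP_def)
    then have "word_le u ?t" "u \<in> words n" using rel_le[OF q(1)] rel_words[OF q(1)] r by auto
    then have "word_less u ?t" "u \<in> words n" using \<open>u \<noteq> ?t\<close> by (auto simp: word_le_def)
    then have "word_less ((a @ u @ m) @ ?t' @ b') ?w"
      using wl_app[of u ?t a "m @ ?t' @ b'"] by simp
    then show "smul (r u) (sh (a @ u @ m) r' b') \<in> Ilt n ?w"
      unfolding r using w q \<open>u \<in> words n\<close> by (intro Kset.Kg) auto
  qed (simp add: fP)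
  have Y2I: "Y2 \<in> Ilt n ?w" unfolding Y2_def
  proof (intro K_psum)
    fix v assume v: "v \<in> SQ - {?t'}"
    then have "r' v \<noteq> 0" "v \<noteq> ?t'" by (auto simp: SQ_def)
    then have "word_le v ?t'" "v \<in> words n" using rel_le[OF q(2)] rel_words[OF q(2)] r by auto
    then have "word_less v ?t'" "v \<in> words n" using \<open>v \<noteq> ?t'\<close> by (auto simp: word_le_def)
    then have "word_less (a @ ?t @ m @ v @ b') ?w"
      using wl_app[of v ?t' "a @ ?t @ m" b'] by simp
    then show "smul (r' v) (sh a r (m @ v @ b')) \<in> Ilt n ?w"
      unfolding r using w q \<open>v \<in> words n\<close> by (intro Kset.Kg) (auto simp: append_assoc)
  qed (simp add: fQ)
  show ?thesis unfolding E by (rule K_psub[OF Y1I Y2I])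
qed

lemma len2E: "length t = 2 \<Longrightarrow> (\<And>x y. t = [x, y] \<Longrightarrow> P) \<Longrightarrow> P"
  by (cases t; cases "tl t") auto

lemma CONF_le:
  fixes dummy :: "'k::field"
  assumes n2: "n \<ge> 2" and w: "a \<in> words n" "b \<in> words n" "a' \<in> words n" "b' \<in> words n"
    and q: "q \<in> Qs n" "q' \<in> Qs n" and eq: "a @ tipw n q @ b = a' @ tipw n q' @ b'"
    and le: "length a \<le> length a'"
  shows "psub (sh a (rel n q) b) (sh a' (rel n q') b') \<in> (Ilt n (a @ tipw n q @ b) :: (xsym list \<Rightarrow> 'k::field) set)"
proof -
  have n1: "n \<ge> 1" using n2 by simp
  let ?t = "tipw n q" and ?t' = "tipw n q'"
  obtain us where us: "a' = a @ us" "?t @ b = us @ ?t' @ b'"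
  proof -
    from eq have "a @ (?t @ b) = a' @ (?t' @ b')" by simp
    then obtain us where "a = a' @ us \<and> us @ (?t @ b) = ?t' @ b' \<or> a @ us = a' \<and> ?t @ b = us @ (?t' @ b')"
      unfolding append_eq_append_conv2 by blast
    then show ?thesis
    proof
      assume H: "a = a' @ us \<and> us @ (?t @ b) = ?t' @ b'"
      then have "us = []" using le by simp
      then show ?thesis using H that[of "[]"] by simp
    qed (use that in blast)
  qed
  obtain x y where t: "?t = [x, y]" using tipw_len[of n q] by (rule len2E)
  obtain y' z where t': "?t' = [y', z]" using tipw_len[of n q'] by (rule len2E)
  consider "us = []" | x0 where "us = [x0]" | u0 u1 m where "us = u0 # u1 # m"
    by (cases us; cases "tl us") auto
  then show ?thesis
  proof cases
    case 1
    then have "?t = ?t'" "b = b'" using us(2) t t' by auto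
    moreover have "a' = a" using us(1) 1 by simp
    moreover have "psub (rel n q) (rel n q') \<in> (Ilt n ?t :: (xsym list \<Rightarrow> 'k::field) set)"
      by (rule SAME[OF n2 q]) (simp add: calculation)
    ultimately show ?thesis using Ilt_shift[of "psub (rel n q) (rel n q')" n ?t a b] w
      by (simp add: sh_psub)
  next
    case 2
    then have xyz: "x0 = x" "y' = y" "b = z # b'" using us(2) t t' by auto
    have "psub (sh [] (rel n q) [z]) (sh [x] (rel n q') []) \<in> (Ilt n [x, y, z] :: (xsym list \<Rightarrow> 'k::field) set)"
      using OVL[OF n2 q t] t' xyz by simp
    then have "sh a (psub (sh [] (rel n q) [z]) (sh [x] (rel n q') [])) b' \<in> (Ilt n (a @ [x, y, z] @ b') :: (xsym list \<Rightarrow> 'k::field) set)"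
      using w by (intro Ilt_shift) auto
    then show ?thesis using us(1) 2 xyz t by (simp add: sh_psub sh_sh)
  next
    case 3
    then have tm: "us = ?t @ m" "b = m @ ?t' @ b'" using us(2) t by auto
    have mw: "m \<in> words n" using w(3) us(1) tm(1) by simp
    have "psub (sh a (rel n q) (m @ ?t' @ b')) (sh (a @ ?t @ m) (rel n q') b')
      \<in> (Ilt n (a @ ?t @ m @ ?t' @ b') :: (xsym list \<Rightarrow> 'k::field) set)"
      using DISJ[OF n1 w(1) mw w(4) q refl refl] .
    then show ?thesis using tm us(1) by simp
  qed
qed

lemma CONF':
  assumes "n \<ge> 2" "a \<in> words n" "b \<in> words n" "a' \<in> words n" "b' \<in> words n"
    "q \<in> Qs n" "q' \<in> Qs n" "a @ tipw n q @ b = a' @ tipw n q' @ b'"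
  shows "psub (sh a (rel n q) b) (sh a' (rel n q') b') \<in> (Ilt n (a @ tipw n q @ b) :: (xsym list \<Rightarrow> 'k::field) set)"
proof (cases "length a \<le> length a'")
  case True then show ?thesis using CONF_le[OF assms True] by simp
next
  case False
  then have "length a' \<le> length a" by simp
  from CONF_le[OF assms(1,4,5,2,3,7,6) assms(8)[symmetric] this]
  have "psub (sh a' (rel n q') b') (sh a (rel n q) b) \<in> (Ilt n (a @ tipw n q @ b) :: (xsym list \<Rightarrow> 'k::field) set)"
    using assms(8) by simp
  then show ?thesis by (rule K_swap)
qed

lemma CONF:
  assumes "n \<ge> 2" "a \<in> words n" "b \<in> words n" "a' \<in> words n" "b' \<in> words n"
    "q \<in> Qs n" "q' \<in> Qs n" "a @ tipw n q @ b = a' @ tipw n q' @ b'"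
  shows "psub (sh a (rel n q) b) (sh a' (rel n q') b') \<in> (Ilt n (a @ tipw n q @ b) :: (xsym list \<Rightarrow> 'k::field) set)"
  by (rule CONF'[OF assms])


lemma L1:
  assumes "n \<ge> 2" "p \<in> Kle n w"
  shows "p \<in> Ilt n w \<or> (\<exists>a q b c. a \<in> words n \<and> b \<in> words n \<and> q \<in> Qs n \<and> w = a @ tipw n q @ b
          \<and> c \<noteq> 0 \<and> psub p (smul c (sh a (rel n q) b)) \<in> Ilt n w)"
  using assms(2)
proof (induction rule: Kset.induct)
  case Kz then show ?case by (simp add: Kset.Kz)
next
  case (Kg a b q c)
  show ?case
  proof (cases "word_less (a @ tipw n q @ b) w")
    case True then show ?thesis using Kg by (intro disjI1 Kset.Kg) auto
  next
    case False
    then have w: "w = a @ tipw n q @ b" using Kg(4) by (simp add: word_le_def)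
    show ?thesis
    proof (cases "c = 0")
      case True
      then have "smul c (sh a (rel n q) b) = pzero" by (simp add: smul_def pzero_def)
      then show ?thesis by (simp add: Kset.Kz)
    next
      case False
      have "psub (smul c (sh a (rel n q) b)) (smul c (sh a (rel n q) b)) = pzero"
        by (simp add: psub_def pzero_def)
      then show ?thesis using Kg w False by (intro disjI2 exI[of _ a] exI[of _ q] exI[of _ b] exI[of _ c]) (simp add: Kset.Kz)
    qed
  qed
next
  case (Ka p p')
  show ?case
  proof (cases "p \<in> Ilt n w")
    case pI: True
    show ?thesis
    proof (cases "p' \<in> Ilt n w")
      case True then show ?thesis using pI by (simp add: Kset.Ka)
    next
      case False
      then obtain a q b c where H: "a \<in> words n" "b \<in> words n" "q \<in> Qs n" "w = a @ tipw n q @ b" "c \<noteq> 0"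
        "psub p' (smul c (sh a (rel n q) b)) \<in> Ilt n w" using Ka by blast
      have "psub (padd p p') (smul c (sh a (rel n q) b)) = padd p (psub p' (smul c (sh a (rel n q) b)))"
        by (auto simp: psub_def padd_def)
      then show ?thesis using H pI by (intro disjI2 exI[of _ a] exI[of _ q] exI[of _ b] exI[of _ c]) (simp add: Kset.Ka)
    qed
  next
    case pN: False
    then obtain a q b c where H: "a \<in> words n" "b \<in> words n" "q \<in> Qs n" "w = a @ tipw n q @ b" "c \<noteq> 0"
        "psub p (smul c (sh a (rel n q) b)) \<in> Ilt n w" using Ka by blast
    show ?thesis
    proof (cases "p' \<in> Ilt n w")
      case True
      have "psub (padd p p') (smul c (sh a (rel n q) b)) = padd (psub p (smul c (sh a (rel n q) b))) p'"
        by (auto simp: psub_def padd_def)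
      then show ?thesis using H True by (intro disjI2 exI[of _ a] exI[of _ q] exI[of _ b] exI[of _ c]) (simp add: Kset.Ka)
    next
      case False
      then obtain a' q' b' c' where H': "a' \<in> words n" "b' \<in> words n" "q' \<in> Qs n" "w = a' @ tipw n q' @ b'" "c' \<noteq> 0"
        "psub p' (smul c' (sh a' (rel n q') b')) \<in> Ilt n w" using Ka by blast
      have C: "psub (sh a' (rel n q') b') (sh a (rel n q) b) \<in> Ilt n w"
        using CONF[OF assms(1) H'(1,2) H(1,2) H'(3) H(3)] H(4) H'(4) by simp
      let ?g = "sh a (rel n q) b" and ?g' = "sh a' (rel n q') b'"
      have R: "padd (padd (psub p (smul c ?g)) (psub p' (smul c' ?g'))) (smul c' (psub ?g' ?g)) \<in> Ilt n w"
        using H(6) H'(6) C by (intro Kset.Ka K_smul)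
      show ?thesis
      proof (cases "c + c' = 0")
        case True
        have "padd p p' = padd (padd (psub p (smul c ?g)) (psub p' (smul c' ?g'))) (smul c' (psub ?g' ?g))"
        proof
          fix u show "padd p p' u = padd (padd (psub p (smul c ?g)) (psub p' (smul c' ?g'))) (smul c' (psub ?g' ?g)) u"
            using True by (simp add: padd_def psub_def smul_def algebra_simps add_eq_0_iff)
        qed
        then show ?thesis using R by simp
      next
        case False
        have "psub (padd p p') (smul (c + c') ?g) = padd (padd (psub p (smul c ?g)) (psub p' (smul c' ?g'))) (smul c' (psub ?g' ?g))"
          by (auto simp: padd_def psub_def smul_def algebra_simps)
        then show ?thesis using R H False by (intro disjI2 exI[of _ a] exI[of _ q] exI[of _ b] exI[of _ "c + c'"]) simp
      qed
    qed
  qed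
qed

lemma L2:
  assumes "n \<ge> 1" "p \<in> Ilt n w"
  shows "p = pzero \<or> (\<exists>w'. w' \<in> words n \<and> word_less w' w \<and> p \<in> Kle n w')"
  using assms(2)
proof (induction rule: Kset.induct)
  case Kz then show ?case by simp
next
  case (Kg a b q c)
  have "smul c (sh a (rel n q) b) \<in> Kle n (a @ tipw n q @ b)"
    using Kg(1-3) by (rule Kset.Kg) simp
  moreover have "a @ tipw n q @ b \<in> words n" using tipw_words[OF Kg(3) assms(1)] Kg(1,2) by simp
  ultimately show ?case using Kg(4) by blast
next
  case (Ka p p')
  show ?case
  proof (cases "p = pzero")
    case True then show ?thesis using Ka by simp
  next
    case False
    then obtain w1 where w1: "w1 \<in> words n" "word_less w1 w" "p \<in> Kle n w1" using Ka by blast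
    show ?thesis
    proof (cases "p' = pzero")
      case True then show ?thesis using w1 by auto
    next
      case False
      then obtain w2 where w2: "w2 \<in> words n" "word_less w2 w" "p' \<in> Kle n w2" using Ka by blast
      show ?thesis
      proof (cases "word_le w1 w2")
        case True
        have "p \<in> Kle n w2" using True wle_trans by (intro K_mono[OF w1(3), of "\<lambda>u. word_le u w2"]) blast
        then have "padd p p' \<in> Kle n w2" using w2(3) by (rule Kset.Ka)
        then show ?thesis using w2 by blast
      next
        case False
        then have "word_le w2 w1" using wle_total by blast
        then have "p' \<in> Kle n w1" using wle_trans by (intro K_mono[OF w2(3), of "\<lambda>u. word_le u w1"]) blast
        then have "padd p p' \<in> Kle n w1" using w1(3) by (intro Kset.Ka)
        then show ?thesis using w1 by blast
      qed
    qed
  qed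
qed

lemma finite_pred: "finite {u \<in> words n. word_less u w}"
proof -
  have "{u \<in> words n. word_less u w} \<subseteq> {xs. set xs \<subseteq> Xn n \<and> length xs \<le> length w}"
    by (auto simp: words_def word_less_def)
  then show ?thesis by (rule finite_subset) (simp add: finite_lists_length_le finite_Xn)
qed

lemma MAIN:
  fixes p :: "xsym list \<Rightarrow> 'k::field"
  assumes "n \<ge> 2"
  shows "p \<in> Kle n w \<Longrightarrow> p \<noteq> pzero \<Longrightarrow>
    \<exists>a q b. a \<in> words n \<and> b \<in> words n \<and> q \<in> Qs n \<and> tip p = a @ tipw n q @ b"
proof (induction "card {u \<in> words n. word_less u w}" arbitrary: w p rule: less_induct)
  case less
  from L1[OF assms less(2)] show ?case
  proof
    assume "p \<in> Ilt n w"
    then obtain w' where w': "w' \<in> words n" "word_less w' w" "p \<in> Kle n w'"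
      using L2[of n p w] assms less(3) by auto
    have "{u \<in> words n. word_less u w'} \<subseteq> {u \<in> words n. word_less u w}"
      using w' wl_trans by auto
    moreover have "w' \<in> {u \<in> words n. word_less u w} - {u \<in> words n. word_less u w'}"
      using w' by auto
    ultimately have "{u \<in> words n. word_less u w'} \<subset> {u \<in> words n. word_less u w}"
      by blast
    then have "card {u \<in> words n. word_less u w'} < card {u \<in> words n. word_less u w}"
      by (intro psubset_card_mono finite_pred)
    from less(1)[OF this w'(3) less(3)] show ?thesis .
  next
    assume "\<exists>a q b c. a \<in> words n \<and> b \<in> words n \<and> q \<in> Qs n \<and> w = a @ tipw n q @ b
          \<and> c \<noteq> 0 \<and> psub p (smul c (sh a (rel n q) b)) \<in> Ilt n w"
    then obtain a q b c where H: "a \<in> words n" "b \<in> words n" "q \<in> Qs n" "w = a @ tipw n q @ b"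
          "c \<noteq> 0" "psub p (smul c (sh a (rel n q) b)) \<in> Ilt n w" by blast
    have "psub p (smul c (sh a (rel n q) b)) w = 0"
      using Ilt_supp[OF H(6), of w] by auto
    moreover have "(sh a (rel n q) b w :: 'k) = 1" using H(4) rel_tip[OF H(3)] assms by simp
    ultimately have "p w = c" by (simp add: psub_def smul_def)
    then have "tip p = w" using H(5) Kle_supp[OF less(2)] by (intro tip_eqI) auto
    then show ?thesis using H by blast
  qed
qed


lemma pmul3_decomp:
  assumes "finite Sa" "\<And>u. a u \<noteq> 0 \<Longrightarrow> u \<in> Sa" "finite Sb" "\<And>v. b v \<noteq> 0 \<Longrightarrow> v \<in> Sb"
  shows "pmul (pmul a g) b = psum Sa (\<lambda>u. psum Sb (\<lambda>v. smul (a u * b v) (sh u g v)))"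
proof -
  have ea: "a = psum Sa (\<lambda>u. smul (a u) (mono u))" by (rule decomp[OF assms(1,2)])
  have eb: "b = psum Sb (\<lambda>v. smul (b v) (mono v))" by (rule decomp[OF assms(3,4)])
  have "pmul (pmul a g) b = pmul (pmul (psum Sa (\<lambda>u. smul (a u) (mono u))) g) (psum Sb (\<lambda>v. smul (b v) (mono v)))"
    by (rule arg_cong2[where f="\<lambda>x y. pmul (pmul x g) y", OF ea eb])
  also have "\<dots> = psum Sb (\<lambda>v. smul (b v) (psum Sa (\<lambda>u. smul (a u) (sh u g v))))"
    by (simp add: pmul_psum_left pmul_psum_right pmul_smul_left pmul_smul_right sh_def)
  also have "\<dots> = psum Sa (\<lambda>u. psum Sb (\<lambda>v. smul (a u * b v) (sh u g v)))"
    unfolding psum_def smul_def by (rule ext, subst sum.swap) (simp add: sum_distrib_left algebra_simps)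
  finally show ?thesis .
qed

lemma M1:
  assumes "n \<ge> 2" "p \<in> Iideal n"
  shows "\<exists>w. p \<in> Kle n w"
  using assms(2) unfolding Iideal_def
proof (induction rule: gen_ideal.induct)
  case zero then show ?case by (blast intro: Kset.Kz)
next
  case (gen a g b)
  obtain q where q: "q \<in> Qs n" "g = rel n q" using gen(2) Rrel_eq by blast
  let ?Sa = "{u. a u \<noteq> 0}" and ?Sb = "{v. b v \<noteq> 0}"
  have fa: "finite ?Sa" "\<And>u. u \<in> ?Sa \<Longrightarrow> u \<in> words n" using gen(1) by (auto simp: alg_def)
  have fb: "finite ?Sb" "\<And>u. u \<in> ?Sb \<Longrightarrow> u \<in> words n" using gen(3) by (auto simp: alg_def)
  define L where "L = (\<Sum>u\<in>?Sa. length u) + 2 + (\<Sum>v\<in>?Sb. length v)"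
  define w0 where "w0 = replicate (Suc L) (U 1 1)"
  have E: "pmul (pmul a g) b = psum ?Sa (\<lambda>u. psum ?Sb (\<lambda>v. smul (a u * b v) (sh u g v)))"
    using fa(1) fb(1) by (intro pmul3_decomp) auto
  have "psum ?Sa (\<lambda>u. psum ?Sb (\<lambda>v. smul (a u * b v) (sh u g v))) \<in> Kle n w0"
  proof (intro K_psum fa(1) fb(1))
    fix u v assume uv: "u \<in> ?Sa" "v \<in> ?Sb"
    have "length u \<le> (\<Sum>u\<in>?Sa. length u)" using uv fa(1) by (intro member_le_sum) auto
    moreover have "length v \<le> (\<Sum>v\<in>?Sb. length v)" using uv fb(1) by (intro member_le_sum) auto
    ultimately have "length (u @ tipw n q @ v) < length w0"
      unfolding w0_def L_def by (simp add: tipw_len)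
    then have "word_le (u @ tipw n q @ v) w0" by (intro wl_imp_le wl_length)
    then show "smul (a u * b v) (sh u g v) \<in> Kle n w0"
      using q fa(2)[OF uv(1)] fb(2)[OF uv(2)] by (auto intro: Kset.Kg)
  qed
  then show ?case using E by auto
next
  case (add p p')
  then obtain w1 w2 where w: "p \<in> Kle n w1" "p' \<in> Kle n w2" by blast
  show ?case
  proof (cases "word_le w1 w2")
    case True
    have "p \<in> Kle n w2" using True wle_trans by (intro K_mono[OF w(1), of "\<lambda>u. word_le u w2"]) blast
    then show ?thesis using w(2) by (blast intro: Kset.Ka)
  next
    case False
    then have "word_le w2 w1" using wle_total by blast
    then have "p' \<in> Kle n w1" using wle_trans by (intro K_mono[OF w(2), of "\<lambda>u. word_le u w1"]) blast
    then show ?thesis using w(1) by (blast intro: Kset.Ka)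
  qed
qed

lemma TI_char:
  assumes "n \<ge> 2"
  shows "Tip (Iideal n :: (xsym list \<Rightarrow> 'k::field) set) = monoid_ideal_gen n (tip_generators n)"
proof
  show "Tip (Iideal n :: (xsym list \<Rightarrow> 'k::field) set) \<subseteq> monoid_ideal_gen n (tip_generators n)"
  proof
    fix m assume "m \<in> Tip (Iideal n :: (xsym list \<Rightarrow> 'k::field) set)"
    then obtain p :: "xsym list \<Rightarrow> 'k" where p: "m = tip p" "p \<in> Iideal n" "p \<noteq> pzero"
      unfolding Tip_def by blast
    obtain w where "p \<in> Kle n w" using M1[OF assms p(2)] by blast
    then obtain a q b where "a \<in> words n" "b \<in> words n" "q \<in> Qs n" "tip p = a @ tipw n q @ b"
      using MAIN[OF assms] p(3) by blast
    then show "m \<in> monoid_ideal_gen n (tip_generators n)"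
      unfolding monoid_ideal_gen_def tipgen_eq using p(1) by blast
  qed
next
  show "monoid_ideal_gen n (tip_generators n) \<subseteq> Tip (Iideal n :: (xsym list \<Rightarrow> 'k::field) set)"
  proof
    fix m assume "m \<in> monoid_ideal_gen n (tip_generators n)"
    then obtain a t b where m: "m = a @ t @ b" "a \<in> words n" "b \<in> words n" "t \<in> tip_generators n"
      unfolding monoid_ideal_gen_def by blast
    then obtain q where q: "q \<in> Qs n" "t = tipw n q" using tipgen_eq by blast
    let ?p = "sh a (rel n q) b :: xsym list \<Rightarrow> 'k"
    have "?p \<in> Iideal n" unfolding Iideal_def sh_def
      using mono_alg[OF m(2)] mono_alg[OF m(3)] q(1) Rrel_eq[where 'k='k]
      by (intro gen_ideal.gen) auto
    moreover have v: "?p m = 1" using m(1) q rel_tip[OF q(1)] assms by simp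
    moreover have "tip ?p = m"
    proof (rule tip_eqI)
      show "?p m \<noteq> 0" using v by simp
    next
      fix u assume "?p u \<noteq> 0"
      moreover have "?p \<in> Kle n m" using m q by (intro K_gen1) auto
      ultimately show "word_le u m" using Kle_supp by blast
    qed
    moreover have "?p \<noteq> pzero" using v by (auto simp: pzero_def)
    ultimately show "m \<in> Tip (Iideal n :: (xsym list \<Rightarrow> 'k::field) set)"
      unfolding Tip_def by blast
  qed
qed

theorem proposition4p1:
  fixes n :: nat
  assumes "n \<ge> 2"
  defines "TI \<equiv> Tip (Iideal n :: (xsym list \<Rightarrow> 'k::field) set)"
  shows "tip_generators n \<subseteq> words n
       \<and> monoid_ideal_gen n (tip_generators n) = TI
       \<and> (\<forall>G. G \<subseteq> words n \<and> monoid_ideal_gen n G = TI \<longrightarrow> tip_generators n \<subseteq> G)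
       \<and> (\<forall>G. G \<subseteq> words n \<and> monoid_ideal_gen n G = TI
              \<and> (\<forall>G'. G' \<subseteq> G \<and> monoid_ideal_gen n G' = TI \<longrightarrow> G' = G)
              \<longrightarrow> G = tip_generators n)
       \<and> {[x] | x. x \<in> Xn n} \<inter> TI = {}"
proof -
  have T: "TI = monoid_ideal_gen n (tip_generators n)" unfolding TI_def by (rule TI_char[OF assms(1)])
  have C1: "tip_generators n \<subseteq> words n" unfolding tipgen_eq using tipw_words assms(1) by auto
  have len: "length m \<ge> 2" if "m \<in> TI" for m
  proof -
    have "m \<in> monoid_ideal_gen n (tip_generators n)" using that T by simp
    then obtain a t b where "m = a @ t @ b" "t \<in> tip_generators n"
      unfolding monoid_ideal_gen_def by blast
    then show ?thesis unfolding tipgen_eq by (auto simp: tipw_len)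
  qed
  have tlen: "length t = 2" if "t \<in> tip_generators n" for t
    using that unfolding tipgen_eq by (auto simp: tipw_len)
  have C3: "tip_generators n \<subseteq> G" if G: "G \<subseteq> words n" "monoid_ideal_gen n G = TI" for G
  proof
    fix t assume t: "t \<in> tip_generators n"
    have mi: "[] @ x @ [] \<in> monoid_ideal_gen n H" if "x \<in> H" for x H
      unfolding monoid_ideal_gen_def mem_Collect_eq
      by (rule exI[of _ "[]"], rule exI[of _ x], rule exI[of _ "[]"]) (simp add: that)
    have "t \<in> TI" unfolding T using mi[OF t] by simp
    then have "t \<in> monoid_ideal_gen n G" using G(2) by simp
    then obtain a g b where g: "t = a @ g @ b" "g \<in> G"
      unfolding monoid_ideal_gen_def by blast
    have "g \<in> TI" unfolding G(2)[symmetric] using mi[OF g(2)] by simp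
    then have "length g \<ge> 2" by (rule len)
    moreover have "length t = 2" by (rule tlen[OF t])
    moreover have "length t = length a + length g + length b" using g(1) by simp
    ultimately have "length a = 0" "length b = 0" by linarith+
    then have "a = [] \<and> b = []" by simp
    then show "t \<in> G" using g by simp
  qed
  have C4: "G = tip_generators n" if G: "G \<subseteq> words n" "monoid_ideal_gen n G = TI"
    "\<forall>G'. G' \<subseteq> G \<and> monoid_ideal_gen n G' = TI \<longrightarrow> G' = G" for G
  proof -
    have "tip_generators n \<subseteq> G" by (rule C3[OF G(1,2)])
    moreover have "monoid_ideal_gen n (tip_generators n) = TI" using T by simp
    ultimately show ?thesis using G(3) by blast
  qed
  have C5: "{[x] | x. x \<in> Xn n} \<inter> TI = {}"
  proof (intro equalityI subsetI)
    fix m assume m: "m \<in> {[x] | x. x \<in> Xn n} \<inter> TI"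
    then have "length m = 1" by auto
    moreover have "length m \<ge> 2" using m len by blast
    ultimately show "m \<in> {}" by simp
  qed simp
  have C3': "\<forall>G. G \<subseteq> words n \<and> monoid_ideal_gen n G = TI \<longrightarrow> tip_generators n \<subseteq> G"
    using C3 by blast
  have C4': "\<forall>G. G \<subseteq> words n \<and> monoid_ideal_gen n G = TI
              \<and> (\<forall>G'. G' \<subseteq> G \<and> monoid_ideal_gen n G' = TI \<longrightarrow> G' = G)
              \<longrightarrow> G = tip_generators n"
    using C4 by blast
  have T': "monoid_ideal_gen n (tip_generators n) = TI" using T by simp
  show ?thesis using C1 T' C3' C4' C5 by (intro conjI)
qed

end
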